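(* Assume that for every $y\in\mathcal Y$ the map $u\mapsto\ell(y,u)$ is convex, twice continuously differentiable and $\rho$-Lipschitz continuous ($\rho\in(0,\infty)$), that $u\mapsto s(y,u)$ is $\gamma$-Lipschitz continuous for every $y$, and that $(X_1,Y_1),\dots,(X_{n+1},Y_{n+1})$ are exchangeable and the predictor is invariant to permutations of its training data. Then for every $\alpha\in(0,1)$, $\mathbb P[Y_{n+1}\in\tilde C^{\mathrm{up},(1)}_{\lambda;\alpha}(X_{n+1})]\ge1-\alpha$, and (almost surely) $$\mathrm{THK}^{(1)}_{\lambda;\alpha}\le\mathrm{THK}^{(0)}_{\lambda;\alpha}.$$
   Context: Let $\mathcal X\subset\mathbb R^d$, $\mathcal Y\subset\mathbb R$, $D=\{(X_1,Y_1),\dots,(X_n,Y_n)\}$ i.i.d. with distribution $P$, $(X_{n+1},Y_{n+1})\sim P$ independent. $D^y=D\cup\{(X_{n+1},y)\}$. $\mathcal H$ is an RKHS with kernel $\kappa_{\mathcal H}$, $K=(\kappa_{\mathcal H}(X_i,X_j))_{1\le i,j\le n+1}$. For a loss $\ell$ and $\lambda>0$, $\hat f_{\lambda;D^y}$ minimizes $\frac1{n+1}\sum_{(x,y')\in D^y}\ell(y',f(x))+\lambda\|f\|_{\mathcal H}^2$. Scores: $S_{\lambda;D^y}(X_i,Y_i)=s(Y_i,\hat f_{\lambda;D^y}(X_i))$ ($i\le n$), $S_{\lambda;D^y}(X_{n+1},y)=s(y,\hat f_{\lambda;D^y}(X_{n+1}))$; full conformal p-value $\hat\pi_{\lambda;D}(X_{n+1},y)=\frac{1+\sum_{i\le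 n}\mathbb 1\{S_{\lambda;D^y}(X_i,Y_i)\ge S_{\lambda;D^y}(X_{n+1},y)\}}{n+1}$, region $\hat C_{\lambda;\alpha}(X_{n+1})=\{y:\hat\pi_{\lambda;D}>\alpha\}$. Fix $z\in\mathcal Y$; approximate scores $\tilde S_{\lambda;D^y}(X_i,Y_i)=s(Y_i,\hat f_{\lambda;D^z}(X_i))$, $\tilde S_{\lambda;D^y}(X_{n+1},y)=s(y,\hat f_{\lambda;D^z}(X_{n+1}))$. Let $\tau^{(0)}_{\lambda;i}=\sqrt{K_{i,i}K_{n+1,n+1}}\frac{\gamma\rho}{\lambda(n+1)}$, $\rho^{(1)}_\lambda(y)=\frac12|\partial_2\ell(y,\hat f_{\lambda;D^z}(X_{n+1}))-\partial_2\ell(z,\hat f_{\lambda;D^z}(X_{n+1}))|$ and $\tau^{(1)}_{\lambda;i}(y)=\sqrt{K_{i,i}K_{n+1,n+1}}\frac{\gamma\rho^{(1)}_\lambda(y)}{\lambda(n+1)}$. For $k\in\{0,1\}$ (with $\tau^{(0)}$ independent of $y$), $\tilde\pi^{\mathrm{up},(k)}_{\lambda;D}(X_{n+1},y)=\frac{1+\sum_{i=1}^n\mathbb 1\{\tilde S_{\lambda;D^y}(X_i,Y_i)+\tau^{(k)}_{\lambda;i}(y)\ge\tilde S_{\lambda;D^y}(X_{n+1},y)-\tau^{(k)}_{\lambda;n+1}(y)\}}{n+1}$, $\tilde C^{\mathrm{up},(k)}_{\lambda;\alpha}(X_{n+1})=\{y:\tilde\pi^{\mathrm{up},(k)}_{\lambda;D}(X_{n+1},y)>\alpha\}$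 and $\mathrm{THK}^{(k)}_{\lambda;\alpha}=\mathcal L(\tilde C^{\mathrm{up},(k)}_{\lambda;\alpha}(X_{n+1})\setminus\hat C_{\lambda;\alpha}(X_{n+1}))$ ($\mathcal L$ Lebesgue measure). *)

theory Defs
  imports "HOL-Analysis.Analysis" "HOL-Probability.Probability"
begin

(* RKHS rendered through a feature map Phi :: 'x => 'h into a real Hilbert space 'h;
   f_w(x) = w \<bullet> Phi x, kernel kappa(x,x') = Phi x \<bullet> Phi x'.
   Data: indices 1..n are the training points, index n+1 is the test point. *)

definition kern :: "('x \<Rightarrow> 'h::real_inner) \<Rightarrow> 'x \<Rightarrow> 'x \<Rightarrow> real" where
  "kern Phi x x' = Phi x \<bullet> Phi x'"

definition reg_risk ::
  "(real \<Rightarrow> real \<Rightarrow> real) \<Rightarrow> ('x \<Rightarrow> 'h::real_inner) \<Rightarrow> real \<Rightarrow> nat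
    \<Rightarrow> (nat \<Rightarrow> 'x) \<Rightarrow> (nat \<Rightarrow> real) \<Rightarrow> 'h \<Rightarrow> real" where
  "reg_risk l Phi lam n xs ys w =
     (\<Sum>i=1..n+1. l (ys i) (w \<bullet> Phi (xs i))) / real (n+1) + lam * (norm w)\<^sup>2"

definition fhat ::
  "(real \<Rightarrow> real \<Rightarrow> real) \<Rightarrow> ('x \<Rightarrow> 'h::real_inner) \<Rightarrow> real \<Rightarrow> nat
    \<Rightarrow> (nat \<Rightarrow> 'x) \<Rightarrow> (nat \<Rightarrow> real) \<Rightarrow> real \<Rightarrow> 'h" where
  "fhat l Phi lam n xs ys y =
     (SOME w. \<forall>v. reg_risk l Phi lam n xs (ys(n+1 := y)) w \<le> reg_risk l Phi lam n xs (ys(n+1 := y)) v)"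

definition pval_full ::
  "(real \<Rightarrow> real \<Rightarrow> real) \<Rightarrow> (real \<Rightarrow> real \<Rightarrow> real) \<Rightarrow> ('x \<Rightarrow> 'h::real_inner) \<Rightarrow> real \<Rightarrow> nat
    \<Rightarrow> (nat \<Rightarrow> 'x) \<Rightarrow> (nat \<Rightarrow> real) \<Rightarrow> real \<Rightarrow> real" where
  "pval_full l s Phi lam n xs ys y =
     (let w = fhat l Phi lam n xs ys y in
      (1 + real (card {i\<in>{1..n}. s (ys i) (w \<bullet> Phi (xs i)) \<ge> s y (w \<bullet> Phi (xs (n+1)))})) / real (n+1))"

definition C_full ::
  "real set \<Rightarrow> (real \<Rightarrow> real \<Rightarrow> real) \<Rightarrow> (real \<Rightarrow> real \<Rightarrow> real) \<Rightarrow> ('x \<Rightarrow> 'h::real_inner) \<Rightarrow> real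
    \<Rightarrow> real \<Rightarrow> nat \<Rightarrow> (nat \<Rightarrow> 'x) \<Rightarrow> (nat \<Rightarrow> real) \<Rightarrow> real set" where
  "C_full Y l s Phi lam alpha n xs ys = {y\<in>Y. pval_full l s Phi lam n xs ys y > alpha}"

(* tau^{(0)}_{lambda;i} (constant in y) *)
definition tau0 ::
  "('x \<Rightarrow> 'h::real_inner) \<Rightarrow> real \<Rightarrow> real \<Rightarrow> real \<Rightarrow> nat \<Rightarrow> (nat \<Rightarrow> 'x) \<Rightarrow> nat \<Rightarrow> real \<Rightarrow> real" where
  "tau0 Phi gamma rho lam n xs i y =
     sqrt (kern Phi (xs i) (xs i) * kern Phi (xs (n+1)) (xs (n+1))) * (gamma * rho) / (lam * real (n+1))"

definition rho1 ::
  "(real \<Rightarrow> real \<Rightarrow> real) \<Rightarrow> ('x \<Rightarrow> 'h::real_inner) \<Rightarrow> real \<Rightarrow> nat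
    \<Rightarrow> (nat \<Rightarrow> 'x) \<Rightarrow> (nat \<Rightarrow> real) \<Rightarrow> real \<Rightarrow> real \<Rightarrow> real" where
  "rho1 l Phi lam n xs ys z y =
     (let u = fhat l Phi lam n xs ys z \<bullet> Phi (xs (n+1)) in
      \<bar>deriv (l y) u - deriv (l z) u\<bar> / 2)"

definition tau1 ::
  "(real \<Rightarrow> real \<Rightarrow> real) \<Rightarrow> ('x \<Rightarrow> 'h::real_inner) \<Rightarrow> real \<Rightarrow> real \<Rightarrow> nat
    \<Rightarrow> (nat \<Rightarrow> 'x) \<Rightarrow> (nat \<Rightarrow> real) \<Rightarrow> real \<Rightarrow> nat \<Rightarrow> real \<Rightarrow> real" where
  "tau1 l Phi gamma lam n xs ys z i y =
     sqrt (kern Phi (xs i) (xs i) * kern Phi (xs (n+1)) (xs (n+1)))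
       * (gamma * rho1 l Phi lam n xs ys z y) / (lam * real (n+1))"

definition pval_up ::
  "(real \<Rightarrow> real \<Rightarrow> real) \<Rightarrow> (real \<Rightarrow> real \<Rightarrow> real) \<Rightarrow> ('x \<Rightarrow> 'h::real_inner) \<Rightarrow> real \<Rightarrow> nat
    \<Rightarrow> (nat \<Rightarrow> 'x) \<Rightarrow> (nat \<Rightarrow> real) \<Rightarrow> real \<Rightarrow> (nat \<Rightarrow> real \<Rightarrow> real) \<Rightarrow> real \<Rightarrow> real" where
  "pval_up l s Phi lam n xs ys z tau y =
     (let w = fhat l Phi lam n xs ys z in
      (1 + real (card {i\<in>{1..n}.
          s (ys i) (w \<bullet> Phi (xs i)) + tau i y \<ge> s y (w \<bullet> Phi (xs (n+1))) - tau (n+1) y}))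
      / real (n+1))"

definition C_up ::
  "real set \<Rightarrow> (real \<Rightarrow> real \<Rightarrow> real) \<Rightarrow> (real \<Rightarrow> real \<Rightarrow> real) \<Rightarrow> ('x \<Rightarrow> 'h::real_inner) \<Rightarrow> real
    \<Rightarrow> real \<Rightarrow> nat \<Rightarrow> (nat \<Rightarrow> 'x) \<Rightarrow> (nat \<Rightarrow> real) \<Rightarrow> real \<Rightarrow> (nat \<Rightarrow> real \<Rightarrow> real) \<Rightarrow> real set" where
  "C_up Y l s Phi lam alpha n xs ys z tau = {y\<in>Y. pval_up l s Phi lam n xs ys z tau y > alpha}"

definition leb_outer :: "real set \<Rightarrow> ennreal" where
  "leb_outer A = (INF B \<in> {B \<in> sets lebesgue. A \<subseteq> B}. emeasure lebesgue B)"

definition exchangeable :: "'w measure \<Rightarrow> nat \<Rightarrow> (nat \<Rightarrow> 'w \<Rightarrow> 'z::topological_space) \<Rightarrow> bool" where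
  "exchangeable M n Z \<longleftrightarrow>
     (\<forall>\<sigma>. \<sigma> permutes {1..n+1} \<longrightarrow>
        distr M (PiM {1..n+1} (\<lambda>_. borel)) (\<lambda>\<omega>. \<lambda>i\<in>{1..n+1}. Z (\<sigma> i) \<omega>)
      = distr M (PiM {1..n+1} (\<lambda>_. borel)) (\<lambda>\<omega>. \<lambda>i\<in>{1..n+1}. Z i \<omega>))"

end

theory Submission
  imports Defs
begin
lemma parallelogram_mid:
  fixes a b :: "'h::real_inner"
  shows "(norm ((a+b)/\<^sub>R 2))^2 = ((norm a)^2 + (norm b)^2)/2 - (norm (a-b))^2/4"
  by (simp add: power2_norm_eq_inner inner_add_left inner_add_right inner_diff_left inner_diff_right
      inner_commute field_simps)

lemma strongly_convex_min_exists:
  fixes F :: "'h::{real_inner,complete_space} \<Rightarrow> real"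
  assumes lam: "lam > 0" and cont: "continuous_on UNIV F"
    and mid: "\<And>a b. F ((a+b)/\<^sub>R 2) \<le> (F a + F b)/2"
    and low: "\<And>w. F w \<ge> c - B * norm w"
  shows "\<exists>w. \<forall>v. F w + lam*(norm w)^2 \<le> F v + lam*(norm v)^2"
proof -
  define G where "G w = F w + lam*(norm w)^2" for w
  have Glow: "G w \<ge> c - B^2/(4*lam)" for w
  proof -
    have "lam * (norm w - B/(2*lam))^2 \<ge> 0" using lam by simp
    moreover have "lam * (norm w - B/(2*lam))^2 = lam*(norm w)^2 - B * norm w + B^2/(4*lam)"
      using lam by (simp add: power2_eq_square field_simps)
    ultimately have "lam*(norm w)^2 - B * norm w + B^2/(4*lam) \<ge> 0" by simp
    thus ?thesis using low[of w] unfolding G_def by linarith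
  qed
  define m where "m = Inf (range G)"
  have bdd: "bdd_below (range G)" using Glow by (metis bdd_belowI2)
  have mle: "m \<le> G w" for w unfolding m_def using bdd by (simp add: cInf_lower)
  have "\<exists>w. G w < m + 1/(real k+1)" for k
  proof -
    have "Inf (range G) < Inf (range G) + 1/(real k+1)" by simp
    then show ?thesis unfolding m_def by (subst (asm) cInf_less_iff[OF _ bdd]) auto
  qed
  then obtain ws where ws: "\<And>k. G (ws k) < m + 1/(real k+1)" by metis
  have Gmid: "G ((a+b)/\<^sub>R 2) \<le> (G a + G b)/2 - lam/4*(norm (a-b))^2" for a b
  proof -
    have e: "lam*(norm ((a+b)/\<^sub>R 2))^2 = lam*(norm a)^2/2 + lam*(norm b)^2/2 - lam/4*(norm (a-b))^2"
      unfolding parallelogram_mid by (simp add: algebra_simps)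
    have aux: "f \<le> (fa+fb)/2 \<Longrightarrow> L = La/2 + Lb/2 - Q \<Longrightarrow> f + L \<le> (fa + La + (fb + Lb))/2 - Q"
      for f fa fb L La Lb Q :: real by argo
    show ?thesis unfolding G_def by (rule aux[OF mid[of a b] e])
  qed
  have close: "lam/4*(norm (ws j - ws k))^2 \<le> 1/(real (min j k)+1)" for j k
  proof -
    have "m \<le> G ((ws j + ws k)/\<^sub>R 2)" by (rule mle)
    also have "\<dots> \<le> (G (ws j) + G (ws k))/2 - lam/4*(norm (ws j - ws k))^2" by (rule Gmid)
    finally have "lam/4*(norm (ws j - ws k))^2 \<le> (G (ws j) + G (ws k))/2 - m" by argo
    also have "\<dots> \<le> 1/(real (min j k)+1)"
    proof -
      have "1/(real j+1) \<le> 1/(real (min j k)+1)" "1/(real k+1) \<le> 1/(real (min j k)+1)"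
        by (auto simp: frac_le min_def)
      thus ?thesis using ws[of j] ws[of k] by argo
    qed
    finally show ?thesis .
  qed
  have "Cauchy ws"
  proof (rule metric_CauchyI)
    fix e :: real assume e: "e > 0"
    obtain N :: nat where N: "4/(lam*e^2) < real N" using reals_Archimedean2 by blast
    show "\<exists>M. \<forall>j\<ge>M. \<forall>k\<ge>M. dist (ws j) (ws k) < e"
    proof (intro exI allI impI)
      fix j k assume jk: "N \<le> j" "N \<le> k"
      have "lam/4*(norm (ws j - ws k))^2 \<le> 1/(real (min j k)+1)" by (rule close)
      also have "\<dots> \<le> 1/(real N+1)" using jk by (simp add: frac_le)
      finally have h: "lam/4*(norm (ws j - ws k))^2 \<le> 1/(real N+1)" .
      have "(lam/4*(norm (ws j - ws k))^2) / (lam/4) \<le> (1/(real N+1)) / (lam/4)"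
        by (rule divide_right_mono[OF h]) (use lam in simp)
      moreover have "(lam/4*(norm (ws j - ws k))^2) / (lam/4) = (norm (ws j - ws k))^2" using lam by simp
      moreover have "(1/(real N+1)) / (lam/4) = 4/(lam*(real N+1))" using lam by (simp add: field_simps)
      ultimately have "(norm (ws j - ws k))^2 \<le> 4/(lam*(real N+1))" using lam by (simp add: mult.commute)
      also have "\<dots> < e^2"
      proof -
        have "4/(lam*e^2) < real N + 1" using N by simp
        hence "4 < (real N + 1) * (lam*e^2)" using lam e by (simp add: pos_divide_less_eq)
        hence "4 < e^2 * (lam*(real N + 1))" by (simp only: mult_ac)
        moreover have "lam*(real N + 1) > 0" using lam by simp
        ultimately show ?thesis by (simp add: pos_divide_less_eq)
      qed
      finally have "norm (ws j - ws k) < e" using e by (simp add: power_less_imp_less_base)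
      thus "dist (ws j) (ws k) < e" by (simp add: dist_norm)
    qed
  qed
  then obtain w where lim: "ws \<longlonglongrightarrow> w" using Cauchy_convergent_iff convergent_def by blast
  have Gcont: "continuous_on UNIV G" unfolding G_def
    by (intro continuous_intros cont)
  have "(\<lambda>k. G (ws k)) \<longlonglongrightarrow> G w"
    by (rule continuous_on_tendsto_compose[OF Gcont lim]) auto
  moreover have "(\<lambda>k. G (ws k)) \<longlonglongrightarrow> m"
  proof (rule tendsto_sandwich[of "\<lambda>_. m" _ _ "\<lambda>k. m + 1/(real k+1)"])
    show "\<forall>\<^sub>F k in sequentially. m \<le> G (ws k)" using mle by simp
    show "\<forall>\<^sub>F k in sequentially. G (ws k) \<le> m + 1/(real k+1)" using ws by (simp add: less_imp_le)
    show "(\<lambda>_. m) \<longlonglongrightarrow> m" by simp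
    show "(\<lambda>k. m + 1/(real k+1)) \<longlonglongrightarrow> m"
      using tendsto_add[OF tendsto_const[of m] LIMSEQ_inverse_real_of_nat] by (simp add: inverse_eq_divide add.commute)
  qed
  ultimately have "G w = m" using LIMSEQ_unique by blast
  thus ?thesis using mle unfolding G_def by metis
qed

lemma aux_half: fixes x a b c :: real assumes "x \<le> (a+b)/2" "0 \<le> c" shows "x/c \<le> (a/c + b/c)/2"
proof -
  have "x/c \<le> ((a+b)/2)/c" by (rule divide_right_mono[OF assms])
  also have "((a+b)/2)/c = (a/c+b/c)/2" by (simp add: add_divide_distrib)
  finally show ?thesis .
qed

locale cfp =
  fixes l :: "real \<Rightarrow> real \<Rightarrow> real" and Phi :: "'x \<Rightarrow> 'h::{real_inner,complete_space}"
    and lam rho :: real and YY :: "real set" and n :: nat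
  assumes lam_pos: "lam > 0"
    and lconv: "\<And>y. y \<in> YY \<Longrightarrow> convex_on UNIV (l y)"
    and llip: "\<And>y. y \<in> YY \<Longrightarrow> rho-lipschitz_on UNIV (l y)"
    and lder: "\<And>y u. y \<in> YY \<Longrightarrow> (l y has_real_derivative deriv (l y) u) (at u)"
begin

lemma tangent: "y \<in> YY \<Longrightarrow> l y a + deriv (l y) a * (b - a) \<le> l y b"
  using convex_on_imp_above_tangent[OF lconv connected_UNIV, of y a b "deriv (l y) a"] lder[of y a]
  by simp

lemma dmono: "y \<in> YY \<Longrightarrow> 0 \<le> (deriv (l y) b - deriv (l y) a) * (b - a)"
  using tangent[of y a b] tangent[of y b a] by (simp add: algebra_simps)

lemma dbound: assumes "y \<in> YY" shows "\<bar>deriv (l y) a\<bar> \<le> rho"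
proof -
  have t1: "l y a + deriv (l y) a * 1 \<le> l y (a+1)" using tangent[OF assms, of a "a+1"] by simp
  have t2: "l y a + deriv (l y) a * (-1) \<le> l y (a-1)" using tangent[OF assms, of a "a-1"] by simp
  have "dist (l y (a+1)) (l y a) \<le> rho * dist (a+1) a" by (rule lipschitz_onD[OF llip[OF assms]]) auto
  hence l1: "\<bar>l y (a+1) - l y a\<bar> \<le> rho" by (simp add: dist_real_def)
  have "dist (l y (a-1)) (l y a) \<le> rho * dist (a-1) a" by (rule lipschitz_onD[OF llip[OF assms]]) auto
  hence l2: "\<bar>l y (a-1) - l y a\<bar> \<le> rho" by (simp add: dist_real_def)
  show ?thesis using t1 t2 l1 l2 by (simp add: abs_le_iff)
qed

lemma lcont: "y \<in> YY \<Longrightarrow> continuous_on UNIV (l y)"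
  using lipschitz_on_continuous_on[OF llip] by blast

lemma ld_chain: "y \<in> YY \<Longrightarrow> (g has_real_derivative g') (at x) \<Longrightarrow>
   ((\<lambda>t. l y (g t)) has_real_derivative deriv (l y) (g x) * g') (at x)"
  by (metis DERIV_chain2 lder)

definition good :: "(nat \<Rightarrow> real) \<Rightarrow> bool" where
  "good ys \<longleftrightarrow> (\<forall>i\<in>{1..n+1}. ys i \<in> YY)"

lemma minimizer_exists:
  assumes g: "good ys"
  shows "\<exists>w. \<forall>v. reg_risk l Phi lam n xs ys w \<le> reg_risk l Phi lam n xs ys v"
proof -
  define F where "F w = (\<Sum>i=1..n+1. l (ys i) (w \<bullet> Phi (xs i))) / real (n+1)" for w
  have yY: "i \<in> {1..n+1} \<Longrightarrow> ys i \<in> YY" for i using g by (auto simp: good_def)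
  have cont: "continuous_on UNIV F" unfolding F_def
  proof (intro continuous_intros)
    fix i assume "i \<in> {1..n+1}"
    show "continuous_on UNIV (\<lambda>w. l (ys i) (w \<bullet> Phi (xs i)))"
      by (rule continuous_on_compose2[OF lcont[OF yY[OF \<open>i \<in> _\<close>]]]) (auto intro!: continuous_intros)
  qed simp
  have mid: "F ((a+b)/\<^sub>R 2) \<le> (F a + F b)/2" for a b
  proof -
    have "(\<Sum>i=1..n+1. l (ys i) (((a+b)/\<^sub>R 2) \<bullet> Phi (xs i)))
        \<le> (\<Sum>i=1..n+1. (l (ys i) (a \<bullet> Phi (xs i)) + l (ys i) (b \<bullet> Phi (xs i)))/2)"
    proof (rule sum_mono)
      fix i assume i: "i \<in> {1..n+1}"
      have c: "l (ys i) ((1 - 1/2) *\<^sub>R (a \<bullet> Phi (xs i)) + (1/2) *\<^sub>R (b \<bullet> Phi (xs i)))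
          \<le> (1 - 1/2) * l (ys i) (a \<bullet> Phi (xs i)) + (1/2) * l (ys i) (b \<bullet> Phi (xs i))"
        by (rule convex_onD[OF lconv[OF yY[OF i]]]) auto
      have e: "((a+b)/\<^sub>R 2) \<bullet> Phi (xs i) = (1 - 1/2) *\<^sub>R (a \<bullet> Phi (xs i)) + (1/2) *\<^sub>R (b \<bullet> Phi (xs i))"
        by (simp add: inner_add_left algebra_simps)
      from c show "l (ys i) (((a+b)/\<^sub>R 2) \<bullet> Phi (xs i))
          \<le> (l (ys i) (a \<bullet> Phi (xs i)) + l (ys i) (b \<bullet> Phi (xs i)))/2" unfolding e[symmetric] by argo
    qed
    also have "\<dots> = ((\<Sum>i=1..n+1. l (ys i) (a \<bullet> Phi (xs i))) + (\<Sum>i=1..n+1. l (ys i) (b \<bullet> Phi (xs i))))/2"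
      by (simp only: sum.distrib[symmetric] sum_divide_distrib)
    finally show ?thesis unfolding F_def by (rule aux_half) simp
  qed
  have low: "F w \<ge> (\<Sum>i=1..n+1. l (ys i) 0)/real (n+1) - (rho * (\<Sum>i=1..n+1. norm (Phi (xs i)))/real (n+1)) * norm w" for w
  proof -
    have "(\<Sum>i=1..n+1. l (ys i) 0 - rho * norm (Phi (xs i)) * norm w) \<le> (\<Sum>i=1..n+1. l (ys i) (w \<bullet> Phi (xs i)))"
    proof (rule sum_mono)
      fix i assume i: "i \<in> {1..n+1}"
      have "dist (l (ys i) (w \<bullet> Phi (xs i))) (l (ys i) 0) \<le> rho * dist (w \<bullet> Phi (xs i)) 0"
        by (rule lipschitz_onD[OF llip[OF yY[OF i]]]) auto
      moreover have "\<bar>w \<bullet> Phi (xs i)\<bar> \<le> norm w * norm (Phi (xs i))" by (rule Cauchy_Schwarz_ineq2)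
      moreover have "rho \<ge> 0" using lipschitz_on_nonneg[OF llip[OF yY[OF i]]] .
      ultimately have "\<bar>l (ys i) (w \<bullet> Phi (xs i)) - l (ys i) 0\<bar> \<le> rho * (norm w * norm (Phi (xs i)))"
        by (smt (verit, best) dist_real_def mult_left_mono real_norm_def)
      thus "l (ys i) 0 - rho * norm (Phi (xs i)) * norm w \<le> l (ys i) (w \<bullet> Phi (xs i))"
        by (simp add: abs_le_iff algebra_simps)
    qed
    hence "(\<Sum>i=1..n+1. l (ys i) 0) - rho * (\<Sum>i=1..n+1. norm (Phi (xs i))) * norm w \<le> (\<Sum>i=1..n+1. l (ys i) (w \<bullet> Phi (xs i)))"
      by (simp add: sum_subtractf sum_distrib_left sum_distrib_right algebra_simps)
    hence "((\<Sum>i=1..n+1. l (ys i) 0) - rho * (\<Sum>i=1..n+1. norm (Phi (xs i))) * norm w)/real (n+1) \<le> F w"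
      unfolding F_def by (rule divide_right_mono) simp
    thus ?thesis by (simp add: diff_divide_distrib)
  qed
  obtain w where "\<forall>v. F w + lam*(norm w)^2 \<le> F v + lam*(norm v)^2"
    using strongly_convex_min_exists[OF lam_pos cont mid low] by blast
  thus ?thesis unfolding reg_risk_def F_def by blast
qed

end

context cfp begin

lemma goodD: "good ys \<Longrightarrow> i \<in> {1..n+1} \<Longrightarrow> ys i \<in> YY" by (auto simp: good_def)

lemma first_order:
  assumes g: "good ys" and wmin: "\<forall>v. reg_risk l Phi lam n xs ys w \<le> reg_risk l Phi lam n xs ys v"
  shows "(\<Sum>i=1..n+1. deriv (l (ys i)) (w \<bullet> Phi (xs i)) * (d \<bullet> Phi (xs i))) / real (n+1) + 2*lam*(w \<bullet> d) = 0"
proof -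
  define G where "G t = reg_risk l Phi lam n xs ys (w + t *\<^sub>R d)" for t
  have Geq: "G = (\<lambda>t. (\<Sum>i=1..n+1. l (ys i) (w \<bullet> Phi (xs i) + t*(d \<bullet> Phi (xs i)))) / real (n+1)
              + lam*(w \<bullet> w + 2*t*(w \<bullet> d) + t^2*(d \<bullet> d)))"
  proof (rule ext)
    fix t
    have "(norm (w + t *\<^sub>R d))^2 = w \<bullet> w + 2*t*(w \<bullet> d) + t^2*(d \<bullet> d)"
      unfolding power2_norm_eq_inner by (simp add: inner_add_left inner_add_right inner_commute power2_eq_square algebra_simps)
    thus "G t = (\<Sum>i=1..n+1. l (ys i) (w \<bullet> Phi (xs i) + t*(d \<bullet> Phi (xs i)))) / real (n+1)
              + lam*(w \<bullet> w + 2*t*(w \<bullet> d) + t^2*(d \<bullet> d))"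
      unfolding G_def reg_risk_def by (simp add: inner_add_left del: sum.cl_ivl_Suc)
  qed
  have Di: "((\<lambda>t. l (ys i) (w \<bullet> Phi (xs i) + t*(d \<bullet> Phi (xs i)))) has_real_derivative
        deriv (l (ys i)) (w \<bullet> Phi (xs i)) * (d \<bullet> Phi (xs i))) (at 0)" if i: "i \<in> {1..n+1}" for i
  proof -
    have "((\<lambda>t. w \<bullet> Phi (xs i) + t*(d \<bullet> Phi (xs i))) has_real_derivative (d \<bullet> Phi (xs i))) (at 0)"
      by (auto intro!: derivative_eq_intros)
    from ld_chain[OF goodD[OF g i] this] show ?thesis by simp
  qed
  have D: "(G has_real_derivative
          (\<Sum>i=1..n+1. deriv (l (ys i)) (w \<bullet> Phi (xs i)) * (d \<bullet> Phi (xs i))) / real (n+1) + 2*lam*(w \<bullet> d)) (at 0)"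
  proof -
    have s: "((\<lambda>t. (\<Sum>i=1..n+1. l (ys i) (w \<bullet> Phi (xs i) + t*(d \<bullet> Phi (xs i)))) / real (n+1)) has_real_derivative
        (\<Sum>i=1..n+1. deriv (l (ys i)) (w \<bullet> Phi (xs i)) * (d \<bullet> Phi (xs i))) / real (n+1)) (at 0)"
      by (intro DERIV_cdivide DERIV_sum Di)
    have q: "((\<lambda>t. lam*(w \<bullet> w + 2*t*(w \<bullet> d) + t^2*(d \<bullet> d))) has_real_derivative 2*lam*(w \<bullet> d)) (at 0)"
      by (auto intro!: derivative_eq_intros)
    show ?thesis unfolding Geq using DERIV_add[OF s q] by simp
  qed
  have M: "\<forall>y. \<bar>0 - y\<bar> < 1 \<longrightarrow> G 0 \<le> G y" using wmin unfolding G_def by simp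
  show ?thesis using DERIV_local_min[OF D _ M] by simp
qed

lemma representer:
  assumes g: "good ys" and wmin: "\<forall>v. reg_risk l Phi lam n xs ys w \<le> reg_risk l Phi lam n xs ys v"
  shows "w = (\<Sum>i=1..n+1. (- deriv (l (ys i)) (w \<bullet> Phi (xs i)) / (2*lam*real (n+1))) *\<^sub>R Phi (xs i))"
proof -
  define u where "u = (\<Sum>i=1..n+1. (deriv (l (ys i)) (w \<bullet> Phi (xs i)) / real (n+1)) *\<^sub>R Phi (xs i))"
  have "(u + (2*lam) *\<^sub>R w) \<bullet> d = 0" for d
  proof -
    have e1: "u \<bullet> d = (\<Sum>i=1..n+1. deriv (l (ys i)) (w \<bullet> Phi (xs i)) * (d \<bullet> Phi (xs i))) / real (n+1)"
      unfolding u_def inner_sum_left sum_divide_distrib by (rule sum.cong) (simp_all add: inner_commute)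
    have e2: "(u + (2*lam) *\<^sub>R w) \<bullet> d = u \<bullet> d + 2*lam*(w \<bullet> d)" by (simp add: inner_add_left)
    show ?thesis unfolding e2 e1 using first_order[OF g wmin, of d] by simp
  qed
  from this[of "u + (2*lam) *\<^sub>R w"] have "u + (2*lam) *\<^sub>R w = 0" by simp
  hence h: "(2*lam) *\<^sub>R w = - u" by (metis add.commute eq_neg_iff_add_eq_0)
  have "w = (1/(2*lam)) *\<^sub>R ((2*lam) *\<^sub>R w)" using lam_pos by simp
  also have "\<dots> = (- 1/(2*lam)) *\<^sub>R u" unfolding h by simp
  finally have "w = (- 1/(2*lam)) *\<^sub>R u" .
  also have "\<dots> = (\<Sum>i=1..n+1. (- deriv (l (ys i)) (w \<bullet> Phi (xs i)) / (2*lam*real (n+1))) *\<^sub>R Phi (xs i))"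
    unfolding u_def scaleR_sum_right by (rule sum.cong) (auto simp: field_simps)
  finally show ?thesis .
qed

end

context cfp begin

lemma strong:
  assumes g: "good ys" and wmin: "\<forall>v. reg_risk l Phi lam n xs ys w \<le> reg_risk l Phi lam n xs ys v"
  shows "reg_risk l Phi lam n xs ys w + lam*(norm (v - w))^2 \<le> reg_risk l Phi lam n xs ys v"
proof -
  define N where "N = real (n+1)"
  have N: "N > 0" unfolding N_def by simp
  define Sw where "Sw = (\<Sum>i=1..n+1. l (ys i) (w \<bullet> Phi (xs i)))"
  define Sv where "Sv = (\<Sum>i=1..n+1. l (ys i) (v \<bullet> Phi (xs i)))"
  define SD where "SD = (\<Sum>i=1..n+1. deriv (l (ys i)) (w \<bullet> Phi (xs i)) * ((v - w) \<bullet> Phi (xs i)))"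
  have fo: "SD / N + 2*lam*(w \<bullet> (v - w)) = 0" unfolding SD_def N_def by (rule first_order[OF g wmin])
  have "(\<Sum>i=1..n+1. l (ys i) (w \<bullet> Phi (xs i)) + deriv (l (ys i)) (w \<bullet> Phi (xs i)) * ((v - w) \<bullet> Phi (xs i))) \<le> Sv"
    unfolding Sv_def
  proof (rule sum_mono)
    fix i assume i: "i \<in> {1..n+1}"
    show "l (ys i) (w \<bullet> Phi (xs i)) + deriv (l (ys i)) (w \<bullet> Phi (xs i)) * ((v - w) \<bullet> Phi (xs i))
        \<le> l (ys i) (v \<bullet> Phi (xs i))"
      using tangent[OF goodD[OF g i], of "w \<bullet> Phi (xs i)" "v \<bullet> Phi (xs i)"] by (simp add: inner_diff_left)
  qed
  hence t: "Sw + SD \<le> Sv" unfolding Sw_def SD_def by (simp add: sum.distrib del: sum.cl_ivl_Suc)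
  have nv: "(norm v)^2 = (norm w)^2 + 2*(w \<bullet> (v - w)) + (norm (v - w))^2"
    unfolding power2_norm_eq_inner by (simp add: inner_diff_left inner_diff_right inner_commute algebra_simps)
  have "Sw / N + SD / N \<le> Sv / N" using divide_right_mono[OF t, of N] N by (simp add: add_divide_distrib)
  moreover have "reg_risk l Phi lam n xs ys v = Sv / N + lam*(norm v)^2" unfolding reg_risk_def Sv_def N_def by simp
  moreover have "reg_risk l Phi lam n xs ys w = Sw / N + lam*(norm w)^2" unfolding reg_risk_def Sw_def N_def by simp
  moreover have "lam*(norm v)^2 = lam*(norm w)^2 + 2*lam*(w \<bullet> (v - w)) + lam*(norm (v - w))^2"
    unfolding nv by (simp add: algebra_simps)
  ultimately show ?thesis using fo by argo
qed

lemma stability: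
  assumes gy: "good (ys(n+1 := y))" and gz: "good (ys(n+1 := z))"
    and w1min: "\<forall>v. reg_risk l Phi lam n xs (ys(n+1 := y)) w1 \<le> reg_risk l Phi lam n xs (ys(n+1 := y)) v"
    and w2min: "\<forall>v. reg_risk l Phi lam n xs (ys(n+1 := z)) w2 \<le> reg_risk l Phi lam n xs (ys(n+1 := z)) v"
  shows "2*lam*real (n+1)*norm (w1 - w2)
     \<le> \<bar>deriv (l y) (w2 \<bullet> Phi (xs (n+1))) - deriv (l z) (w2 \<bullet> Phi (xs (n+1)))\<bar> * norm (Phi (xs (n+1)))"
proof -
  define d where "d = w1 - w2"
  define N where "N = real (n+1)"
  have N: "N > 0" unfolding N_def by simp
  define a where "a i = w1 \<bullet> Phi (xs i)" for i
  define b where "b i = w2 \<bullet> Phi (xs i)" for i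
  define D where "D i = deriv (l (ys i))" for i
  have dab: "d \<bullet> Phi (xs i) = a i - b i" for i unfolding d_def a_def b_def by (simp add: inner_diff_left)
  have yY: "y \<in> YY" using goodD[OF gy, of "n+1"] by simp
  have zY: "z \<in> YY" using goodD[OF gz, of "n+1"] by simp
  have iY: "i \<in> {1..n} \<Longrightarrow> ys i \<in> YY" for i using goodD[OF gy, of i] by auto
  have fo1: "(\<Sum>i=1..n+1. deriv (l ((ys(n+1 := y)) i)) (a i) * (d \<bullet> Phi (xs i))) / N + 2*lam*(w1 \<bullet> d) = 0"
    unfolding a_def N_def by (rule first_order[OF gy w1min])
  have fo2: "(\<Sum>i=1..n+1. deriv (l ((ys(n+1 := z)) i)) (b i) * (d \<bullet> Phi (xs i))) / N + 2*lam*(w2 \<bullet> d) = 0"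
    unfolding b_def N_def by (rule first_order[OF gz w2min])
  define S1 where "S1 = (\<Sum>i=1..n. D i (a i) * (a i - b i))"
  define S2 where "S2 = (\<Sum>i=1..n. D i (b i) * (a i - b i))"
  have s1: "(\<Sum>i=1..n+1. deriv (l ((ys(n+1 := y)) i)) (a i) * (d \<bullet> Phi (xs i)))
      = S1 + deriv (l y) (a (n+1)) * (a (n+1) - b (n+1))"
    unfolding S1_def D_def dab by (simp add: sum.cong[OF refl, of "{1..n}"])
  have s2: "(\<Sum>i=1..n+1. deriv (l ((ys(n+1 := z)) i)) (b i) * (d \<bullet> Phi (xs i)))
      = S2 + deriv (l z) (b (n+1)) * (a (n+1) - b (n+1))"
    unfolding S2_def D_def dab by (simp add: sum.cong[OF refl, of "{1..n}"])
  have e1: "S1 + deriv (l y) (a (n+1)) * (a (n+1) - b (n+1)) + N*(2*lam*(w1 \<bullet> d)) = 0"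
    using fo1 N unfolding s1 by (simp add: field_simps)
  have e2: "S2 + deriv (l z) (b (n+1)) * (a (n+1) - b (n+1)) + N*(2*lam*(w2 \<bullet> d)) = 0"
    using fo2 N unfolding s2 by (simp add: field_simps)
  have mono: "S2 \<le> S1"
  proof -
    have "0 \<le> (\<Sum>i=1..n. (D i (a i) - D i (b i)) * (a i - b i))"
      by (rule sum_nonneg) (use dmono iY in \<open>auto simp: D_def\<close>)
    thus ?thesis unfolding S1_def S2_def by (simp add: left_diff_distrib sum_subtractf)
  qed
  have m2: "0 \<le> (deriv (l y) (a (n+1)) - deriv (l y) (b (n+1))) * (a (n+1) - b (n+1))"
    by (rule dmono[OF yY])
  have wd: "w1 \<bullet> d - w2 \<bullet> d = (norm d)^2"
    unfolding d_def power2_norm_eq_inner by (simp add: inner_diff_left)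
  define q where "q = deriv (l y) (b (n+1)) - deriv (l z) (b (n+1))"
  have key: "N*(2*lam)*(norm d)^2 \<le> - q * (a (n+1) - b (n+1))"
  proof -
    have "N*(2*lam*(w1 \<bullet> d)) - N*(2*lam*(w2 \<bullet> d)) = N*(2*lam)*(norm d)^2"
      unfolding wd[symmetric] by (simp add: algebra_simps)
    moreover have "deriv (l y) (a (n+1)) * (a (n+1) - b (n+1)) - deriv (l z) (b (n+1)) * (a (n+1) - b (n+1))
       = (deriv (l y) (a (n+1)) - deriv (l y) (b (n+1))) * (a (n+1) - b (n+1)) + q * (a (n+1) - b (n+1))"
      unfolding q_def by (simp add: algebra_simps)
    ultimately show ?thesis using e1 e2 mono m2 by argo
  qed
  also have "\<dots> \<le> \<bar>q\<bar> * (norm d * norm (Phi (xs (n+1))))"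
  proof -
    have "\<bar>a (n+1) - b (n+1)\<bar> \<le> norm d * norm (Phi (xs (n+1)))"
      unfolding dab[symmetric] by (rule Cauchy_Schwarz_ineq2)
    hence "\<bar>q * (a (n+1) - b (n+1))\<bar> \<le> \<bar>q\<bar> * (norm d * norm (Phi (xs (n+1))))"
      by (simp add: abs_mult mult_left_mono)
    thus ?thesis by linarith
  qed
  finally have k2: "N*(2*lam)*(norm d)^2 \<le> \<bar>q\<bar> * (norm d * norm (Phi (xs (n+1))))" .
  show ?thesis
  proof (cases "norm d = 0")
    case True thus ?thesis unfolding d_def by simp
  next
    case False
    hence pos: "norm d > 0" by simp
    have "(N*(2*lam)*norm d) * norm d \<le> (\<bar>q\<bar> * norm (Phi (xs (n+1)))) * norm d"
      using k2 by (simp add: power2_eq_square algebra_simps)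
    hence "N*(2*lam)*norm d \<le> \<bar>q\<bar> * norm (Phi (xs (n+1)))"
      using pos by (simp add: mult_le_cancel_right)
    thus ?thesis unfolding q_def b_def d_def N_def by (simp add: algebra_simps)
  qed
qed

end

context cfp begin

lemma fhat_min:
  assumes "\<forall>i\<in>{1..n}. ys i \<in> YY" "y \<in> YY"
  shows "\<forall>v. reg_risk l Phi lam n xs (ys(n+1 := y)) (fhat l Phi lam n xs ys y) \<le> reg_risk l Phi lam n xs (ys(n+1 := y)) v"
proof -
  have "good (ys(n+1 := y))" using assms by (auto simp: good_def)
  from minimizer_exists[OF this, of xs] show ?thesis unfolding fhat_def by (rule someI_ex)
qed

lemma sqrt_kern: "sqrt (kern Phi a a * kern Phi b b) = norm (Phi a) * norm (Phi b)"
  by (simp add: kern_def real_sqrt_mult flip: power2_norm_eq_inner)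

lemma fhat_close:
  assumes ys: "\<forall>i\<in>{1..n}. ys i \<in> YY" and y: "y \<in> YY" and z: "z \<in> YY"
  shows "norm (fhat l Phi lam n xs ys y - fhat l Phi lam n xs ys z)
     \<le> rho1 l Phi lam n xs ys z y * norm (Phi (xs (n+1))) / (lam * real (n+1))"
proof -
  have gy: "good (ys(n+1 := y))" "good (ys(n+1 := z))" using ys y z by (auto simp: good_def)
  have "2*lam*real (n+1)*norm (fhat l Phi lam n xs ys y - fhat l Phi lam n xs ys z)
     \<le> \<bar>deriv (l y) (fhat l Phi lam n xs ys z \<bullet> Phi (xs (n+1))) - deriv (l z) (fhat l Phi lam n xs ys z \<bullet> Phi (xs (n+1)))\<bar>
        * norm (Phi (xs (n+1)))"
    by (rule stability[OF gy fhat_min[OF ys y] fhat_min[OF ys z]])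
  also have "\<dots> = 2 * rho1 l Phi lam n xs ys z y * norm (Phi (xs (n+1)))"
    unfolding rho1_def Let_def by simp
  finally have h: "(lam*real (n+1)) * (2 * norm (fhat l Phi lam n xs ys y - fhat l Phi lam n xs ys z))
       \<le> 2 * rho1 l Phi lam n xs ys z y * norm (Phi (xs (n+1)))" by (simp add: algebra_simps)
  have p: "lam * real (n+1) > 0" using lam_pos by simp
  show ?thesis using h p by (simp add: pos_le_divide_eq mult.commute)
qed

lemma score_close:
  assumes ys: "\<forall>i\<in>{1..n}. ys i \<in> YY" and y: "y \<in> YY" and z: "z \<in> YY"
    and slip: "gamma-lipschitz_on UNIV (s t)"
  shows "\<bar>s t (fhat l Phi lam n xs ys y \<bullet> Phi (xs j)) - s t (fhat l Phi lam n xs ys z \<bullet> Phi (xs j))\<bar>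
      \<le> tau1 l Phi gamma lam n xs ys z j y"
proof -
  define d where "d = fhat l Phi lam n xs ys y - fhat l Phi lam n xs ys z"
  have g0: "gamma \<ge> 0" using lipschitz_on_nonneg[OF slip] .
  have "dist (s t (fhat l Phi lam n xs ys y \<bullet> Phi (xs j))) (s t (fhat l Phi lam n xs ys z \<bullet> Phi (xs j)))
     \<le> gamma * dist (fhat l Phi lam n xs ys y \<bullet> Phi (xs j)) (fhat l Phi lam n xs ys z \<bullet> Phi (xs j))"
    by (rule lipschitz_onD[OF slip]) auto
  also have "dist (fhat l Phi lam n xs ys y \<bullet> Phi (xs j)) (fhat l Phi lam n xs ys z \<bullet> Phi (xs j)) = \<bar>d \<bullet> Phi (xs j)\<bar>"
    unfolding d_def by (simp add: dist_real_def inner_diff_left)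
  also have "gamma * \<bar>d \<bullet> Phi (xs j)\<bar> \<le> gamma * (norm d * norm (Phi (xs j)))"
    by (rule mult_left_mono[OF Cauchy_Schwarz_ineq2 g0])
  also have "\<dots> \<le> gamma * ((rho1 l Phi lam n xs ys z y * norm (Phi (xs (n+1))) / (lam * real (n+1))) * norm (Phi (xs j)))"
    unfolding d_def by (intro mult_left_mono mult_right_mono fhat_close[OF ys y z] g0) auto
  also have "\<dots> = tau1 l Phi gamma lam n xs ys z j y"
    unfolding tau1_def sqrt_kern by (simp add: field_simps)
  finally show ?thesis by (simp add: dist_real_def)
qed

lemma pval_full_le_up1:
  assumes ys: "\<forall>i\<in>{1..n}. ys i \<in> YY" and y: "y \<in> YY" and z: "z \<in> YY"
    and slip: "\<And>t. t \<in> YY \<Longrightarrow> gamma-lipschitz_on UNIV (s t)"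
  shows "pval_full l s Phi lam n xs ys y \<le> pval_up l s Phi lam n xs ys z (tau1 l Phi gamma lam n xs ys z) y"
proof -
  define w1 where "w1 = fhat l Phi lam n xs ys y"
  define w2 where "w2 = fhat l Phi lam n xs ys z"
  have sub: "{i\<in>{1..n}. s (ys i) (w1 \<bullet> Phi (xs i)) \<ge> s y (w1 \<bullet> Phi (xs (n+1)))}
    \<subseteq> {i\<in>{1..n}. s (ys i) (w2 \<bullet> Phi (xs i)) + tau1 l Phi gamma lam n xs ys z i y
          \<ge> s y (w2 \<bullet> Phi (xs (n+1))) - tau1 l Phi gamma lam n xs ys z (n+1) y}"
  proof
    fix i assume "i \<in> {i\<in>{1..n}. s (ys i) (w1 \<bullet> Phi (xs i)) \<ge> s y (w1 \<bullet> Phi (xs (n+1)))}"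
    hence i: "i \<in> {1..n}" and ge: "s (ys i) (w1 \<bullet> Phi (xs i)) \<ge> s y (w1 \<bullet> Phi (xs (n+1)))" by auto
    have c1: "\<bar>s (ys i) (w1 \<bullet> Phi (xs i)) - s (ys i) (w2 \<bullet> Phi (xs i))\<bar> \<le> tau1 l Phi gamma lam n xs ys z i y"
      unfolding w1_def w2_def by (rule score_close[where s=s and t="ys i", OF ys y z slip]) (use ys i in auto)
    have c2: "\<bar>s y (w1 \<bullet> Phi (xs (n+1))) - s y (w2 \<bullet> Phi (xs (n+1)))\<bar> \<le> tau1 l Phi gamma lam n xs ys z (n+1) y"
      unfolding w1_def w2_def by (rule score_close[where s=s and t=y, OF ys y z slip[OF y]])
    show "i \<in> {i\<in>{1..n}. s (ys i) (w2 \<bullet> Phi (xs i)) + tau1 l Phi gamma lam n xs ys z i y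
          \<ge> s y (w2 \<bullet> Phi (xs (n+1))) - tau1 l Phi gamma lam n xs ys z (n+1) y}"
      using i ge c1 c2 by auto
  qed
  have "card {i\<in>{1..n}. s (ys i) (w1 \<bullet> Phi (xs i)) \<ge> s y (w1 \<bullet> Phi (xs (n+1)))}
    \<le> card {i\<in>{1..n}. s (ys i) (w2 \<bullet> Phi (xs i)) + tau1 l Phi gamma lam n xs ys z i y
          \<ge> s y (w2 \<bullet> Phi (xs (n+1))) - tau1 l Phi gamma lam n xs ys z (n+1) y}"
    by (rule card_mono[OF _ sub]) simp
  thus ?thesis unfolding pval_full_def pval_up_def Let_def w1_def w2_def
    by (simp add: divide_right_mono)
qed

lemma tau1_le_tau0:
  assumes y: "y \<in> YY" and z: "z \<in> YY" and g0: "gamma \<ge> 0"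
  shows "tau1 l Phi gamma lam n xs ys z i y \<le> tau0 Phi gamma rho lam n xs i y"
proof -
  have "rho1 l Phi lam n xs ys z y \<le> rho"
  proof -
    define u where "u = fhat l Phi lam n xs ys z \<bullet> Phi (xs (n+1))"
    have "\<bar>deriv (l y) u - deriv (l z) u\<bar> \<le> \<bar>deriv (l y) u\<bar> + \<bar>deriv (l z) u\<bar>" by (rule abs_triangle_ineq4)
    also have "\<dots> \<le> 2 * rho" using dbound[OF y, of u] dbound[OF z, of u] by simp
    finally show ?thesis unfolding rho1_def Let_def u_def[symmetric] by simp
  qed
  hence "gamma * rho1 l Phi lam n xs ys z y \<le> gamma * rho" by (rule mult_left_mono[OF _ g0])
  hence "gamma * rho1 l Phi lam n xs ys z y / (lam * real (n+1)) \<le> gamma * rho / (lam * real (n+1))"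
    by (rule divide_right_mono) (use lam_pos in simp)
  hence "sqrt (kern Phi (xs i) (xs i) * kern Phi (xs (n+1)) (xs (n+1))) * (gamma * rho1 l Phi lam n xs ys z y / (lam * real (n+1)))
     \<le> sqrt (kern Phi (xs i) (xs i) * kern Phi (xs (n+1)) (xs (n+1))) * (gamma * rho / (lam * real (n+1)))"
    by (rule mult_left_mono) (simp add: sqrt_kern)
  thus ?thesis unfolding tau1_def tau0_def by simp
qed

lemma C_up_mono:
  assumes z: "z \<in> YY" and g0: "gamma \<ge> 0"
  shows "C_up YY l s Phi lam alpha n xs ys z (tau1 l Phi gamma lam n xs ys z)
       \<subseteq> C_up YY l s Phi lam alpha n xs ys z (tau0 Phi gamma rho lam n xs)"
proof
  fix y assume "y \<in> C_up YY l s Phi lam alpha n xs ys z (tau1 l Phi gamma lam n xs ys z)"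
  hence y: "y \<in> YY" and p: "pval_up l s Phi lam n xs ys z (tau1 l Phi gamma lam n xs ys z) y > alpha"
    unfolding C_up_def by auto
  define w where "w = fhat l Phi lam n xs ys z"
  have t: "tau1 l Phi gamma lam n xs ys z i y \<le> tau0 Phi gamma rho lam n xs i y" for i
    by (rule tau1_le_tau0[OF y z g0])
  have "card {i\<in>{1..n}. s (ys i) (w \<bullet> Phi (xs i)) + tau1 l Phi gamma lam n xs ys z i y
          \<ge> s y (w \<bullet> Phi (xs (n+1))) - tau1 l Phi gamma lam n xs ys z (n+1) y}
     \<le> card {i\<in>{1..n}. s (ys i) (w \<bullet> Phi (xs i)) + tau0 Phi gamma rho lam n xs i y
          \<ge> s y (w \<bullet> Phi (xs (n+1))) - tau0 Phi gamma rho lam n xs (n+1) y}"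
  proof (rule card_mono)
    show "finite {i\<in>{1..n}. s (ys i) (w \<bullet> Phi (xs i)) + tau0 Phi gamma rho lam n xs i y
          \<ge> s y (w \<bullet> Phi (xs (n+1))) - tau0 Phi gamma rho lam n xs (n+1) y}" by simp
  next
    show "{i\<in>{1..n}. s (ys i) (w \<bullet> Phi (xs i)) + tau1 l Phi gamma lam n xs ys z i y
          \<ge> s y (w \<bullet> Phi (xs (n+1))) - tau1 l Phi gamma lam n xs ys z (n+1) y}
     \<subseteq> {i\<in>{1..n}. s (ys i) (w \<bullet> Phi (xs i)) + tau0 Phi gamma rho lam n xs i y
          \<ge> s y (w \<bullet> Phi (xs (n+1))) - tau0 Phi gamma rho lam n xs (n+1) y}"
    proof (rule subsetI)
      fix i assume "i \<in> {i\<in>{1..n}. s (ys i) (w \<bullet> Phi (xs i)) + tau1 l Phi gamma lam n xs ys z i y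
          \<ge> s y (w \<bullet> Phi (xs (n+1))) - tau1 l Phi gamma lam n xs ys z (n+1) y}"
      thus "i \<in> {i\<in>{1..n}. s (ys i) (w \<bullet> Phi (xs i)) + tau0 Phi gamma rho lam n xs i y
          \<ge> s y (w \<bullet> Phi (xs (n+1))) - tau0 Phi gamma rho lam n xs (n+1) y}"
        using t[of i] t[of "n+1"] by simp
    qed
  qed
  hence "pval_up l s Phi lam n xs ys z (tau1 l Phi gamma lam n xs ys z) y
      \<le> pval_up l s Phi lam n xs ys z (tau0 Phi gamma rho lam n xs) y"
    unfolding pval_up_def Let_def w_def by (simp add: divide_right_mono)
  thus "y \<in> C_up YY l s Phi lam alpha n xs ys z (tau0 Phi gamma rho lam n xs)"
    using p y unfolding C_up_def by auto
qed

lemma C_full_sub: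
  assumes ys: "\<forall>i\<in>{1..n}. ys i \<in> YY" and z: "z \<in> YY"
    and slip: "\<And>t. t \<in> YY \<Longrightarrow> gamma-lipschitz_on UNIV (s t)"
  shows "C_full YY l s Phi lam alpha n xs ys \<subseteq> C_up YY l s Phi lam alpha n xs ys z (tau1 l Phi gamma lam n xs ys z)"
proof -
  have "pval_full l s Phi lam n xs ys y \<le> pval_up l s Phi lam n xs ys z (tau1 l Phi gamma lam n xs ys z) y"
    if "y \<in> YY" for y by (rule pval_full_le_up1[OF ys that z slip])
  thus ?thesis unfolding C_full_def C_up_def by (auto intro: less_le_trans)
qed

end

definition coef :: "nat \<Rightarrow> rat list \<Rightarrow> nat \<Rightarrow> real" where
  "coef n qs k = (if k \<in> {1..n+1} \<and> k < length qs then real_of_rat (qs ! k) else 0)"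

definition wsum :: "('x \<Rightarrow> 'h::real_inner) \<Rightarrow> nat \<Rightarrow> (nat \<Rightarrow> 'x) \<Rightarrow> (nat \<Rightarrow> real) \<Rightarrow> 'h" where
  "wsum Phi n xs a = (\<Sum>k=1..n+1. a k *\<^sub>R Phi (xs k))"

lemma rat_approx:
  fixes a :: "nat \<Rightarrow> real" assumes th: "th > 0"
  shows "\<exists>qs. \<forall>k\<in>{1..n+1}. \<bar>coef n qs k - a k\<bar> < th"
proof -
  have "\<forall>k. \<exists>q::rat. \<bar>real_of_rat q - a k\<bar> < th"
  proof
    fix k
    obtain r where r: "r \<in> \<rat>" "a k - th < r" "r < a k + th" using Rats_dense_in_real[of "a k - th" "a k + th"] th by auto
    then obtain q where "r = real_of_rat q" by (auto elim: Rats_cases)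
    thus "\<exists>q::rat. \<bar>real_of_rat q - a k\<bar> < th" using r by (intro exI[of _ q]) auto
  qed
  then obtain qf where qf: "\<And>k. \<bar>real_of_rat (qf k) - a k\<bar> < th" by metis
  define qs where "qs = map qf [0..<n+2]"
  have "coef n qs k = real_of_rat (qf k)" if "k \<in> {1..n+1}" for k
    using that unfolding coef_def qs_def by (simp del: upt_Suc add: nth_map)
  thus ?thesis using qf by (intro exI[of _ qs]) auto
qed

context cfp begin

lemma risk_cont: assumes g: "good ys" shows "continuous_on UNIV (reg_risk l Phi lam n xs ys)"
proof -
  have "continuous_on UNIV (\<lambda>w. (\<Sum>i=1..n+1. l (ys i) (w \<bullet> Phi (xs i))) / real (n+1) + lam * (norm w)\<^sup>2)"
  proof (intro continuous_intros)
    fix i assume "i \<in> {1..n+1}"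
    show "continuous_on UNIV (\<lambda>w. l (ys i) (w \<bullet> Phi (xs i)))"
      by (rule continuous_on_compose2[OF lcont[OF goodD[OF g \<open>i \<in> _\<close>]]]) (auto intro!: continuous_intros)
  qed simp
  moreover have "reg_risk l Phi lam n xs ys = (\<lambda>w. (\<Sum>i=1..n+1. l (ys i) (w \<bullet> Phi (xs i))) / real (n+1) + lam * (norm w)\<^sup>2)"
    by (rule ext) (simp add: reg_risk_def del: sum.cl_ivl_Suc)
  ultimately show ?thesis by simp
qed

lemma approx_inf:
  assumes g: "good ys" and wmin: "\<forall>v. reg_risk l Phi lam n xs ys w \<le> reg_risk l Phi lam n xs ys v"
    and e: "e > 0"
  shows "\<exists>qs. reg_risk l Phi lam n xs ys (wsum Phi n xs (coef n qs)) < reg_risk l Phi lam n xs ys w + e"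
proof -
  define a where "a k = - deriv (l (ys k)) (w \<bullet> Phi (xs k)) / (2*lam*real (n+1))" for k
  have wrep: "w = wsum Phi n xs a" unfolding wsum_def a_def by (rule representer[OF g wmin])
  obtain eta where eta: "eta > 0" "\<And>v. dist v w < eta \<Longrightarrow> dist (reg_risk l Phi lam n xs ys v) (reg_risk l Phi lam n xs ys w) < e"
    using risk_cont[OF g, of xs] e unfolding continuous_on_iff by blast
  define B where "B = (\<Sum>k=1..n+1. norm (Phi (xs k))) + 1"
  have B: "B > 0" unfolding B_def by (simp add: sum_nonneg add_nonneg_pos del: sum.cl_ivl_Suc)
  obtain qs where qs0: "\<forall>k\<in>{1..n+1}. \<bar>coef n qs k - a k\<bar> < eta / B"
    using rat_approx[of "eta/B" n a] eta B by auto
  hence qs: "\<And>k. k \<in> {1..n+1} \<Longrightarrow> \<bar>coef n qs k - a k\<bar> < eta / B" by blast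
  have "norm (wsum Phi n xs (coef n qs) - w) = norm (\<Sum>k=1..n+1. (coef n qs k - a k) *\<^sub>R Phi (xs k))"
    unfolding wrep wsum_def by (simp add: sum_subtractf scaleR_diff_left del: sum.cl_ivl_Suc)
  also have "\<dots> \<le> (\<Sum>k=1..n+1. norm ((coef n qs k - a k) *\<^sub>R Phi (xs k)))" by (rule norm_sum)
  also have "\<dots> \<le> (\<Sum>k=1..n+1. eta / B * norm (Phi (xs k)))"
  proof (rule sum_mono)
    fix k assume k: "k \<in> {1..n+1}"
    have "\<bar>coef n qs k - a k\<bar> \<le> eta / B" using qs[OF k] by simp
    thus "norm ((coef n qs k - a k) *\<^sub>R Phi (xs k)) \<le> eta / B * norm (Phi (xs k))"
      unfolding norm_scaleR real_norm_def by (rule mult_right_mono[OF _ norm_ge_zero])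
  qed
  also have "\<dots> = eta / B * (\<Sum>k=1..n+1. norm (Phi (xs k)))" by (simp add: sum_distrib_left del: sum.cl_ivl_Suc)
  also have "\<dots> < eta / B * B"
    using eta B unfolding B_def by (intro mult_strict_left_mono) auto
  also have "\<dots> = eta" using B by simp
  finally have "dist (wsum Phi n xs (coef n qs)) w < eta" by (simp add: dist_norm)
  from eta(2)[OF this] show ?thesis by (intro exI[of _ qs]) (simp add: dist_real_def abs_less_iff)
qed

lemma near_min:
  assumes g: "good ys" and wmin: "\<forall>v. reg_risk l Phi lam n xs ys w \<le> reg_risk l Phi lam n xs ys v"
    and le: "reg_risk l Phi lam n xs ys v \<le> reg_risk l Phi lam n xs ys w + dl"
  shows "\<bar>v \<bullet> Phi (xs j) - w \<bullet> Phi (xs j)\<bar> \<le> sqrt (dl / lam) * norm (Phi (xs j))"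
proof -
  have "lam * (norm (v - w))^2 \<le> dl" using strong[OF g wmin, of v] le by simp
  hence "(norm (v - w))^2 \<le> dl / lam" using lam_pos by (simp add: pos_le_divide_eq mult.commute)
  hence n: "norm (v - w) \<le> sqrt (dl / lam)" using real_le_rsqrt by blast
  have "\<bar>v \<bullet> Phi (xs j) - w \<bullet> Phi (xs j)\<bar> = \<bar>(v - w) \<bullet> Phi (xs j)\<bar>" by (simp add: inner_diff_left)
  also have "\<dots> \<le> norm (v - w) * norm (Phi (xs j))" by (rule Cauchy_Schwarz_ineq2)
  also have "\<dots> \<le> sqrt (dl / lam) * norm (Phi (xs j))" by (rule mult_right_mono[OF n]) simp
  finally show ?thesis .
qed

lemma charact:
  assumes g: "good ys" and wmin: "\<forall>v. reg_risk l Phi lam n xs ys w \<le> reg_risk l Phi lam n xs ys v"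
  shows "(w \<bullet> Phi (xs j) < c) \<longleftrightarrow>
    (\<exists>r::rat. \<exists>qs::rat list. 0 < r \<and>
        wsum Phi n xs (coef n qs) \<bullet> Phi (xs j) + sqrt (real_of_rat r / lam) * norm (Phi (xs j)) < c \<and>
        (\<forall>qs'::rat list. reg_risk l Phi lam n xs ys (wsum Phi n xs (coef n qs))
             < reg_risk l Phi lam n xs ys (wsum Phi n xs (coef n qs')) + real_of_rat r))"
  (is "?L \<longleftrightarrow> ?R")
proof
  let ?m = "reg_risk l Phi lam n xs ys w"
  let ?Rq = "\<lambda>qs. reg_risk l Phi lam n xs ys (wsum Phi n xs (coef n qs))"
  let ?K = "norm (Phi (xs j))"
  assume L: ?L
  define gap where "gap = c - w \<bullet> Phi (xs j)"
  have gap: "gap > 0" using L unfolding gap_def by simp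
  have "lam * gap^2 / (4 * (?K^2 + 1)) > 0" using gap lam_pos by (intro divide_pos_pos mult_pos_pos) (auto intro: add_nonneg_pos)
  then obtain dq where dq: "dq \<in> \<rat>" "0 < dq" "dq < lam * gap^2 / (4 * (?K^2 + 1))"
    using Rats_dense_in_real[of 0] by blast
  then obtain r where r: "dq = real_of_rat r" by (auto elim: Rats_cases)
  have r0: "0 < r" using dq(2) r by simp
  have sK: "sqrt (dq / lam) * ?K < gap / 2"
  proof -
    have dlt: "dq / lam < gap^2 / (4 * (?K^2 + 1))" using dq(3) lam_pos by (simp add: divide_less_eq field_simps)
    have "(dq / lam) * ?K^2 < gap^2 / (4 * (?K^2 + 1)) * ?K^2" if "?K \<noteq> 0"
      by (rule mult_strict_right_mono[OF dlt]) (use that in simp)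
    hence "(dq / lam) * ?K^2 < gap^2 / (4 * (?K^2 + 1)) * ?K^2 \<or> ?K = 0" by blast
    moreover have "gap^2 / (4 * (?K^2 + 1)) * ?K^2 \<le> (gap/2)^2"
    proof -
      have "?K^2 / (?K^2 + 1) \<le> 1" unfolding divide_le_eq_1 by (auto intro: add_nonneg_pos)
      hence h: "gap^2/4 * (?K^2 / (?K^2 + 1)) \<le> gap^2/4" by (rule mult_left_le) simp
      have "?K^2 + 1 \<noteq> 0" by (metis add_nonneg_pos zero_le_power2 zero_less_one less_irrefl)
      hence "gap^2 / (4 * (?K^2 + 1)) * ?K^2 = gap^2/4 * (?K^2 / (?K^2 + 1))" by (simp add: field_simps)
      also have "\<dots> \<le> gap^2/4" by (rule h)
      also have "\<dots> = (gap/2)^2" by (simp add: power_divide)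
      finally show ?thesis .
    qed
    moreover have "(sqrt (dq / lam) * ?K)^2 = (dq / lam) * ?K^2"
      using dq(2) lam_pos by (simp add: power_mult_distrib)
    ultimately have "(sqrt (dq / lam) * ?K)^2 < (gap/2)^2 \<or> ?K = 0" by auto
    thus ?thesis
    proof
      assume "(sqrt (dq / lam) * ?K)^2 < (gap/2)^2"
      thus ?thesis by (rule power2_less_imp_less) (use gap in simp)
    next
      assume "?K = 0" thus ?thesis using gap by simp
    qed
  qed
  obtain qs where qs: "?Rq qs < ?m + dq / 2" using approx_inf[OF g wmin, of "dq/2"] dq(2) by auto
  have all: "?Rq qs < ?Rq qs' + real_of_rat r" for qs'
  proof -
    have "?m \<le> ?Rq qs'" using wmin by simp
    thus ?thesis using qs r dq(2) by argo
  qed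
  have "\<bar>wsum Phi n xs (coef n qs) \<bullet> Phi (xs j) - w \<bullet> Phi (xs j)\<bar> \<le> sqrt ((dq/2) / lam) * ?K"
    by (rule near_min[OF g wmin]) (use qs in simp)
  also have "\<dots> \<le> sqrt (dq / lam) * ?K"
  proof -
    have "(dq/2)/lam \<le> dq/lam" by (rule divide_right_mono) (use dq(2) lam_pos in auto)
    hence "sqrt ((dq/2)/lam) \<le> sqrt (dq/lam)" by (rule real_sqrt_le_mono)
    thus ?thesis by (rule mult_right_mono) simp
  qed
  finally have "wsum Phi n xs (coef n qs) \<bullet> Phi (xs j) + sqrt (real_of_rat r / lam) * ?K < c"
    using sK unfolding r[symmetric] gap_def by argo
  thus ?R using r0 all by blast
next
  let ?m = "reg_risk l Phi lam n xs ys w"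
  let ?Rq = "\<lambda>qs. reg_risk l Phi lam n xs ys (wsum Phi n xs (coef n qs))"
  let ?K = "norm (Phi (xs j))"
  assume ?R
  then obtain r qs where r: "0 < r" and E: "wsum Phi n xs (coef n qs) \<bullet> Phi (xs j) + sqrt (real_of_rat r / lam) * ?K < c"
    and all: "\<And>qs'. ?Rq qs < ?Rq qs' + real_of_rat r" by blast
  have le: "?Rq qs \<le> ?m + real_of_rat r"
  proof (rule ccontr)
    assume "\<not> ?thesis"
    hence "?Rq qs - ?m - real_of_rat r > 0" by simp
    from approx_inf[OF g wmin this] obtain qs' where "?Rq qs' < ?m + (?Rq qs - ?m - real_of_rat r)" by blast
    with all[of qs'] show False by simp
  qed
  have "\<bar>wsum Phi n xs (coef n qs) \<bullet> Phi (xs j) - w \<bullet> Phi (xs j)\<bar> \<le> sqrt (real_of_rat r / lam) * ?K"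
    by (rule near_min[OF g wmin le])
  thus ?L using E by argo
qed

end

definition OM :: "nat \<Rightarrow> (nat \<Rightarrow> ('x::topological_space \<times> real)) measure" where
  "OM n = PiM {1..n+1} (\<lambda>_. borel)"

definition GY :: "real set \<Rightarrow> nat \<Rightarrow> (nat \<Rightarrow> ('x \<times> real)) set" where
  "GY YY n = {p. \<forall>i\<in>{1..n+1}. snd (p i) \<in> YY}"

definition RR :: "real set \<Rightarrow> nat \<Rightarrow> (nat \<Rightarrow> ('x::topological_space \<times> real)) measure" where
  "RR YY n = restrict_space (OM n) (GY YY n)"

definition Vf :: "(real \<Rightarrow> real \<Rightarrow> real) \<Rightarrow> ('x \<Rightarrow> 'h::real_inner) \<Rightarrow> real \<Rightarrow> nat \<Rightarrow> (nat \<Rightarrow> ('x \<times> real)) \<Rightarrow> nat \<Rightarrow> real" where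
  "Vf l Phi lam n p j = fhat l Phi lam n (\<lambda>i. fst (p i)) (\<lambda>i. snd (p i)) (snd (p (n+1))) \<bullet> Phi (fst (p j))"

lemma space_RR: "space (RR YY n) = GY YY n \<inter> space (OM n)"
  unfolding RR_def by (simp add: space_restrict_space)

lemma meas_comp: "i \<in> {1..n+1} \<Longrightarrow> (\<lambda>p. p i) \<in> borel_measurable (RR YY n)"
  unfolding RR_def OM_def by (intro measurable_restrict_space1) (rule measurable_component_singleton)

lemma meas_fst: "i \<in> {1..n+1} \<Longrightarrow> (\<lambda>p. fst (p i)) \<in> borel_measurable (RR YY n)"
  using measurable_compose[OF meas_comp borel_measurable_continuous_onI[OF continuous_on_fst[OF continuous_on_id]]]
  by simp

lemma meas_snd: "i \<in> {1..n+1} \<Longrightarrow> (\<lambda>p. snd (p i)) \<in> borel_measurable (RR YY n)"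
  using measurable_compose[OF meas_comp borel_measurable_continuous_onI[OF continuous_on_snd[OF continuous_on_id]]]
  by simp

lemma meas_kern:
  fixes Phi :: "'x::second_countable_topology \<Rightarrow> 'h::real_inner"
  assumes km: "(\<lambda>(x, x'). kern Phi x x') \<in> borel_measurable (borel :: ('x \<times> 'x) measure)"
    and "k \<in> {1..n+1}" "m \<in> {1..n+1}"
  shows "(\<lambda>p. kern Phi (fst (p k)) (fst (p m))) \<in> borel_measurable (RR YY n)"
proof -
  have "(\<lambda>p. (fst (p k), fst (p m))) \<in> borel_measurable (RR YY n :: (nat \<Rightarrow> ('x \<times> real)) measure)"
    by (rule borel_measurable_Pair[OF meas_fst[OF assms(2)] meas_fst[OF assms(3)]])
  from measurable_compose[OF this km] show ?thesis by simp
qed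

lemma meas_l:
  fixes l :: "real \<Rightarrow> real \<Rightarrow> real"
  assumes lm: "(\<lambda>(y, u). l y u) \<in> borel_measurable (restrict_space borel (YY \<times> UNIV))"
    and i: "i \<in> {1..n+1}" and f: "f \<in> borel_measurable (RR YY n :: (nat \<Rightarrow> ('x::topological_space \<times> real)) measure)"
  shows "(\<lambda>p. l (snd (p i)) (f p)) \<in> borel_measurable (RR YY n)"
proof -
  have "(\<lambda>p. (snd (p i), f p)) \<in> measurable (RR YY n) (restrict_space borel (YY \<times> UNIV))"
  proof (rule measurable_restrict_space2)
    show "(\<lambda>p. (snd (p i), f p)) \<in> space (RR YY n) \<rightarrow> YY \<times> UNIV"
      using i unfolding space_RR GY_def by auto
    show "(\<lambda>p. (snd (p i), f p)) \<in> borel_measurable (RR YY n)"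
      by (rule borel_measurable_Pair[OF meas_snd[OF i] f])
  qed
  from measurable_compose[OF this lm] show ?thesis by simp
qed

lemma kern_formula:
  "reg_risk l Phi lam n xs ys (wsum Phi n xs a)
   = (\<Sum>i=1..n+1. l (ys i) (\<Sum>k=1..n+1. a k * kern Phi (xs k) (xs i))) / real (n+1)
     + lam * (\<Sum>k=1..n+1. \<Sum>m=1..n+1. a k * a m * kern Phi (xs k) (xs m))"
proof -
  have i: "wsum Phi n xs a \<bullet> Phi (xs i) = (\<Sum>k=1..n+1. a k * kern Phi (xs k) (xs i))" for i
    unfolding wsum_def kern_def by (simp add: inner_sum_left del: sum.cl_ivl_Suc)
  have "(norm (wsum Phi n xs a))^2 = (\<Sum>k=1..n+1. \<Sum>m=1..n+1. a k * a m * kern Phi (xs k) (xs m))"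
    unfolding power2_norm_eq_inner wsum_def kern_def
    by (simp add: inner_sum_left inner_sum_right sum_distrib_left mult.assoc inner_commute mult.left_commute del: sum.cl_ivl_Suc)
  thus ?thesis unfolding reg_risk_def i by simp
qed

lemma wsum_inner: "wsum Phi n xs a \<bullet> Phi (xs j) = (\<Sum>k=1..n+1. a k * kern Phi (xs k) (xs j))"
  unfolding wsum_def kern_def by (simp add: inner_sum_left del: sum.cl_ivl_Suc)

lemma norm_kern: "norm (Phi x) = sqrt (kern Phi x x)"
  unfolding kern_def by (simp add: norm_eq_sqrt_inner)

lemma good_space:
  assumes "p \<in> space (RR YY n)"
  shows "\<forall>i\<in>{1..n+1}. snd (p i) \<in> YY"
  using assms unfolding space_RR GY_def by auto

lemma meas_Vf:
  fixes Phi :: "'x::second_countable_topology \<Rightarrow> 'h::{real_inner,complete_space}"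
  assumes cf: "cfp l lam rho YY"
    and km: "(\<lambda>(x, x'). kern Phi x x') \<in> borel_measurable (borel :: ('x \<times> 'x) measure)"
    and lm: "(\<lambda>(y, u). l y u) \<in> borel_measurable (restrict_space borel (YY \<times> UNIV))"
    and j: "j \<in> {1..n+1}"
  shows "(\<lambda>p. Vf l Phi lam n p j) \<in> borel_measurable (RR YY n)"
proof -
  define Rq where "Rq qs p = (\<Sum>i=1..n+1. l (snd (p i)) (\<Sum>k=1..n+1. coef n qs k * kern Phi (fst (p k)) (fst (p i)))) / real (n+1)
     + lam * (\<Sum>k=1..n+1. \<Sum>m=1..n+1. coef n qs k * coef n qs m * kern Phi (fst (p k)) (fst (p m)))" for qs p
  define Eq where "Eq qs r (p :: nat \<Rightarrow> 'x \<times> real) = (\<Sum>k=1..n+1. coef n qs k * kern Phi (fst (p k)) (fst (p j)))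
     + sqrt (real_of_rat r / lam) * sqrt (kern Phi (fst (p j)) (fst (p j)))" for qs r p
  have mR: "Rq qs \<in> borel_measurable (RR YY n)" for qs
    unfolding Rq_def
    by (intro borel_measurable_add borel_measurable_divide borel_measurable_sum borel_measurable_times
        borel_measurable_const meas_l[OF lm] meas_kern[OF km]) auto
  have sq: "(\<lambda>p. sqrt (kern Phi (fst (p j)) (fst (p j)))) \<in> borel_measurable (RR YY n :: (nat \<Rightarrow> ('x \<times> real)) measure)"
    using measurable_compose[OF meas_kern[OF km j j] borel_measurable_sqrt] by simp
  have mE: "Eq qs r \<in> borel_measurable (RR YY n)" for qs r
    unfolding Eq_def
    by (intro borel_measurable_add borel_measurable_sum borel_measurable_times sq
        borel_measurable_const meas_kern[OF km] j) auto
  have eq: "{p \<in> space (RR YY n). Vf l Phi lam n p j < c}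
    = {p \<in> space (RR YY n). \<exists>r::rat. \<exists>qs::rat list. 0 < r \<and> Eq qs r p < c \<and> (\<forall>qs'. Rq qs p < Rq qs' p + real_of_rat r)}"
    for c
  proof (rule Collect_cong, rule conj_cong[OF refl])
    fix p :: "nat \<Rightarrow> 'x \<times> real" assume p: "p \<in> space (RR YY n)"
    define xs where "xs = (\<lambda>i. fst (p i))"
    define ys where "ys = (\<lambda>i. snd (p i))"
    have gy: "\<forall>i\<in>{1..n+1}. ys i \<in> YY" using good_space[OF p] unfolding ys_def by auto
    have g: "cfp.good YY n ys" using gy by (simp add: cfp.good_def[OF cf])
    have wmin0: "\<forall>v. reg_risk l Phi lam n xs (ys(n+1 := ys (n+1))) (fhat l Phi lam n xs ys (ys (n+1)))
       \<le> reg_risk l Phi lam n xs (ys(n+1 := ys (n+1))) v"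
      by (rule cfp.fhat_min[OF cf]) (use gy in auto)
    hence wmin: "\<forall>v. reg_risk l Phi lam n xs ys (fhat l Phi lam n xs ys (ys (n+1)))
       \<le> reg_risk l Phi lam n xs ys v" by simp
    have V: "Vf l Phi lam n p j = fhat l Phi lam n xs ys (ys (n+1)) \<bullet> Phi (xs j)"
      unfolding Vf_def xs_def ys_def by simp
    have R: "Rq qs p = reg_risk l Phi lam n xs ys (wsum Phi n xs (coef n qs))" for qs
      unfolding Rq_def kern_formula xs_def ys_def ..
    have E: "Eq qs r p = wsum Phi n xs (coef n qs) \<bullet> Phi (xs j) + sqrt (real_of_rat r / lam) * norm (Phi (xs j))" for qs r
      unfolding Eq_def wsum_inner norm_kern by (simp add: xs_def)
    show "Vf l Phi lam n p j < c \<longleftrightarrow> (\<exists>r::rat. \<exists>qs::rat list. 0 < r \<and> Eq qs r p < c \<and> (\<forall>qs'. Rq qs p < Rq qs' p + real_of_rat r))"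
      unfolding V R E by (rule cfp.charact[OF cf g wmin])
  qed
  have "{p \<in> space (RR YY n). \<exists>r::rat. \<exists>qs::rat list. 0 < r \<and> Eq qs r p < c \<and> (\<forall>qs'. Rq qs p < Rq qs' p + real_of_rat r)}
      \<in> sets (RR YY n)" for c
    using mR mE by measurable
  thus ?thesis unfolding borel_measurable_iff_less eq by blast
qed

lemma fhat_cong:
  assumes "\<And>w. reg_risk l Phi lam n xs (ys(n+1 := y)) w = reg_risk l Phi lam n xs' (ys'(n+1 := y')) w"
  shows "fhat l Phi lam n xs ys y = fhat l Phi lam n xs' ys' y'"
  unfolding fhat_def using assms by simp

lemma reg_risk_cong:
  assumes "\<And>i. i \<in> {1..n+1} \<Longrightarrow> xs i = xs' i" "\<And>i. i \<in> {1..n+1} \<Longrightarrow> ys i = ys' i"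
  shows "reg_risk l Phi lam n xs ys w = reg_risk l Phi lam n xs' ys' w"
proof -
  have "(\<Sum>i=1..n+1. l (ys i) (w \<bullet> Phi (xs i))) = (\<Sum>i=1..n+1. l (ys' i) (w \<bullet> Phi (xs' i)))"
    by (rule sum.cong) (use assms in auto)
  thus ?thesis unfolding reg_risk_def by simp
qed

lemma card_sum: "finite I \<Longrightarrow> card {i\<in>I. P i} = (\<Sum>i\<in>I. if P i then 1 else 0)"
  by (simp add: sum.If_cases Int_def)

lemma card_perm:
  assumes "\<sigma> permutes I" "finite I"
  shows "card {i\<in>I. P (\<sigma> i)} = card {i\<in>I. P i}"
proof -
  have "card {i\<in>I. P (\<sigma> i)} = (\<Sum>i\<in>I. (\<lambda>k. if P k then 1 else 0) (\<sigma> i))" using assms(2) by (simp add: card_sum)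
  also have "\<dots> = (\<Sum>i\<in>I. if P i then 1 else 0)"
    using sum.permute[OF assms(1), of "\<lambda>k. if P k then 1 else 0"] unfolding comp_def by (rule sym)
  also have "\<dots> = card {i\<in>I. P i}" using assms(2) by (simp add: card_sum)
  finally show ?thesis .
qed

lemma comb:
  fixes S :: "nat \<Rightarrow> real"
  assumes fin: "finite I" and a: "0 \<le> a"
  shows "real (card {j\<in>I. real (card {i\<in>I. S j \<le> S i}) \<le> a}) \<le> a"
proof (cases "{j\<in>I. real (card {i\<in>I. S j \<le> S i}) \<le> a} = {}")
  case True thus ?thesis using a by (simp only: True card.empty)
next
  case False
  define J where "J = {j\<in>I. real (card {i\<in>I. S j \<le> S i}) \<le> a}"
  have finJ: "finite J" using fin unfolding J_def by simp
  have neJ: "J \<noteq> {}" using False unfolding J_def .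
  have "Min (S ` J) \<in> S ` J" using finJ neJ by (intro Min_in) auto
  then obtain j0 where j0: "j0 \<in> J" "S j0 = Min (S ` J)" by (metis imageE)
  have "J \<subseteq> {i\<in>I. S j0 \<le> S i}"
  proof
    fix j assume "j \<in> J"
    hence "S j0 \<le> S j" using j0 finJ by simp
    thus "j \<in> {i\<in>I. S j0 \<le> S i}" using \<open>j \<in> J\<close> unfolding J_def by simp
  qed
  hence "card J \<le> card {i\<in>I. S j0 \<le> S i}" using fin by (intro card_mono) auto
  moreover have "real (card {i\<in>I. S j0 \<le> S i}) \<le> a" using j0(1) unfolding J_def by simp
  ultimately show ?thesis unfolding J_def[symmetric] by linarith
qed

lemma meas_l2:
  fixes l :: "real \<Rightarrow> real \<Rightarrow> real"
  assumes lm: "(\<lambda>(y, u). l y u) \<in> borel_measurable (restrict_space borel (YY \<times> UNIV))"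
    and f: "f \<in> borel_measurable N" and g: "g \<in> borel_measurable N" and fY: "\<And>x. x \<in> space N \<Longrightarrow> f x \<in> YY"
  shows "(\<lambda>x. l (f x) (g x)) \<in> borel_measurable N"
proof -
  have "(\<lambda>x. (f x, g x)) \<in> measurable N (restrict_space borel (YY \<times> UNIV))"
  proof (rule measurable_restrict_space2)
    show "(\<lambda>x. (f x, g x)) \<in> space N \<rightarrow> YY \<times> UNIV" using fY by auto
    show "(\<lambda>x. (f x, g x)) \<in> borel_measurable N" by (rule borel_measurable_Pair[OF f g])
  qed
  from measurable_compose[OF this lm] show ?thesis by simp
qed

lemma meas_deriv:
  fixes l :: "real \<Rightarrow> real \<Rightarrow> real"
  assumes lm: "(\<lambda>(y, u). l y u) \<in> borel_measurable (restrict_space borel (YY \<times> UNIV))"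
    and lder: "\<And>y u. y \<in> YY \<Longrightarrow> (l y has_real_derivative deriv (l y) u) (at u)"
  shows "(\<lambda>(y, u). deriv (l y) u) \<in> borel_measurable (restrict_space borel (YY \<times> UNIV))"
proof (rule borel_measurable_LIMSEQ_real[where u="\<lambda>k (y, u). (l y (u + 1 / real (Suc k)) - l y u) / (1 / real (Suc k))"])
  fix x assume x: "x \<in> space (restrict_space borel (YY \<times> UNIV) :: (real \<times> real) measure)"
  obtain y u where xy: "x = (y, u)" by (cases x)
  have y: "y \<in> YY" using x xy by (simp add: space_restrict_space)
  define F where "F h = (l y (u + h) - l y u) / h" for h
  define sq where "sq k = 1 / real (Suc k)" for k
  have "(F \<longlongrightarrow> deriv (l y) u) (at 0)"
    using lder[OF y, of u] unfolding F_def by (simp add: DERIV_def)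
  hence A: "\<forall>X. (\<forall>n. X n \<noteq> 0) \<and> X \<longlonglongrightarrow> 0 \<longrightarrow> (\<lambda>n. F (X n)) \<longlonglongrightarrow> deriv (l y) u"
    using LIMSEQ_SEQ_conv by blast
  have "sq \<longlonglongrightarrow> 0" unfolding sq_def using LIMSEQ_inverse_real_of_nat by (simp add: inverse_eq_divide)
  moreover have "\<forall>k. sq k \<noteq> 0" unfolding sq_def by simp
  ultimately have "(\<lambda>k. F (sq k)) \<longlonglongrightarrow> deriv (l y) u" using A by blast
  thus "(\<lambda>k. (case x of (y, u) \<Rightarrow> (l y (u + 1 / real (Suc k)) - l y u) / (1 / real (Suc k))))
      \<longlonglongrightarrow> (case x of (y, u) \<Rightarrow> deriv (l y) u)" unfolding xy F_def sq_def prod.case .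
next
  fix k
  let ?S = "restrict_space borel (YY \<times> UNIV) :: (real \<times> real) measure"
  have f1: "(\<lambda>x::real\<times>real. fst x) \<in> borel_measurable ?S"
    by (intro measurable_restrict_space1 borel_measurable_continuous_onI continuous_on_fst continuous_on_id)
  have f2: "(\<lambda>x::real\<times>real. snd x + 1 / real (Suc k)) \<in> borel_measurable ?S"
    by (intro measurable_restrict_space1 borel_measurable_continuous_onI continuous_intros)
  have f3: "(\<lambda>x::real\<times>real. snd x) \<in> borel_measurable ?S"
    by (intro measurable_restrict_space1 borel_measurable_continuous_onI continuous_on_snd continuous_on_id)
  have fY: "\<And>x. x \<in> space ?S \<Longrightarrow> fst x \<in> YY" by (auto simp: space_restrict_space)
  have "(\<lambda>x. (l (fst x) (snd x + 1 / real (Suc k)) - l (fst x) (snd x)) / (1 / real (Suc k))) \<in> borel_measurable ?S"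
    by (intro borel_measurable_divide borel_measurable_diff borel_measurable_const meas_l2[OF lm f1 f2 fY] meas_l2[OF lm f1 f3 fY])
  thus "(\<lambda>x. case x of (y, u) \<Rightarrow> (l y (u + 1 / real (Suc k)) - l y u) / (1 / real (Suc k))) \<in> borel_measurable ?S"
    by (simp add: case_prod_beta)
qed

lemma perm_risk:
  assumes "\<sigma> permutes {1..n+1}"
  shows "reg_risk l Phi lam n (\<lambda>i. xs (\<sigma> i)) (\<lambda>i. ys (\<sigma> i)) w = reg_risk l Phi lam n xs ys w"
proof -
  have "(\<Sum>i=1..n+1. l (ys (\<sigma> i)) (w \<bullet> Phi (xs (\<sigma> i)))) = (\<Sum>i=1..n+1. l (ys i) (w \<bullet> Phi (xs i)))"
    using sum.permute[OF assms, of "\<lambda>i. l (ys i) (w \<bullet> Phi (xs i))"] unfolding comp_def by (rule sym)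
  thus ?thesis unfolding reg_risk_def by simp
qed

lemma leb_outer_mono: "A \<subseteq> B \<Longrightarrow> leb_outer A \<le> leb_outer B"
  unfolding leb_outer_def by (rule INF_superset_mono) auto

theorem corollary14:
  fixes M :: "'w measure"
    and X :: "nat \<Rightarrow> 'w \<Rightarrow> real ^ 'd"
    and Y :: "nat \<Rightarrow> 'w \<Rightarrow> real"
    and XX :: "(real ^ 'd) set" and YY :: "real set"
    and Phi :: "real ^ 'd \<Rightarrow> 'h :: {real_inner, complete_space}"
    and l s :: "real \<Rightarrow> real \<Rightarrow> real"
    and lam rho gamma alpha z :: real and n :: nat
  assumes prob: "prob_space M"
    and meas_X: "\<And>i. i \<in> {1..n+1} \<Longrightarrow> X i \<in> borel_measurable M"
    and meas_Y: "\<And>i. i \<in> {1..n+1} \<Longrightarrow> Y i \<in> borel_measurable M"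
    and range_X: "\<And>i \<omega>. i \<in> {1..n+1} \<Longrightarrow> \<omega> \<in> space M \<Longrightarrow> X i \<omega> \<in> XX"
    and range_Y: "\<And>i \<omega>. i \<in> {1..n+1} \<Longrightarrow> \<omega> \<in> space M \<Longrightarrow> Y i \<omega> \<in> YY"
    and exch: "exchangeable M n (\<lambda>i \<omega>. (X i \<omega>, Y i \<omega>))"
    and kern_meas: "(\<lambda>(x, x'). kern Phi x x') \<in> borel_measurable (borel :: ((real ^ 'd) \<times> (real ^ 'd)) measure)"
    and l_meas: "(\<lambda>(y, u). l y u) \<in> borel_measurable (restrict_space borel (YY \<times> UNIV))"
    and s_meas: "(\<lambda>(y, u). s y u) \<in> borel_measurable (restrict_space borel (YY \<times> UNIV))"
    and lam_pos: "lam > 0"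
    and rho_pos: "rho > 0"
    and l_convex: "\<And>y. y \<in> YY \<Longrightarrow> convex_on UNIV (l y)"
    and l_C2: "\<And>y. y \<in> YY \<Longrightarrow> \<exists>l' l''. (\<forall>u. (l y has_real_derivative l' u) (at u))
                      \<and> (\<forall>u. (l' has_real_derivative l'' u) (at u)) \<and> continuous_on UNIV l''"
    and l_lip: "\<And>y. y \<in> YY \<Longrightarrow> rho-lipschitz_on UNIV (l y)"
    and s_lip: "\<And>y. y \<in> YY \<Longrightarrow> gamma-lipschitz_on UNIV (s y)"
    and z_in: "z \<in> YY"
    and alpha: "0 < alpha" "alpha < 1"
  shows "prob_space.prob M
           {\<omega> \<in> space M.
              Y (n+1) \<omega> \<in> C_up YY l s Phi lam alpha n (\<lambda>i. X i \<omega>) (\<lambda>i. Y i \<omega>) z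
                 (tau1 l Phi gamma lam n (\<lambda>i. X i \<omega>) (\<lambda>i. Y i \<omega>) z)}
         \<ge> 1 - alpha
       \<and> (AE \<omega> in M.
            leb_outer (C_up YY l s Phi lam alpha n (\<lambda>i. X i \<omega>) (\<lambda>i. Y i \<omega>) z
                         (tau1 l Phi gamma lam n (\<lambda>i. X i \<omega>) (\<lambda>i. Y i \<omega>) z)
                       - C_full YY l s Phi lam alpha n (\<lambda>i. X i \<omega>) (\<lambda>i. Y i \<omega>))
          \<le> leb_outer (C_up YY l s Phi lam alpha n (\<lambda>i. X i \<omega>) (\<lambda>i. Y i \<omega>) z
                         (tau0 Phi gamma rho lam n (\<lambda>i. X i \<omega>))
                       - C_full YY l s Phi lam alpha n (\<lambda>i. X i \<omega>) (\<lambda>i. Y i \<omega>)))"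
proof -
  interpret P: prob_space M by (rule prob)
  have g0: "gamma \<ge> 0" using lipschitz_on_nonneg[OF s_lip[OF z_in]] .
  have lder: "(l y has_real_derivative deriv (l y) u) (at u)" if y: "y \<in> YY" for y u
  proof -
    from l_C2[OF y] obtain l' where d: "\<forall>u. (l y has_real_derivative l' u) (at u)" by blast
    hence "deriv (l y) u = l' u" by (simp add: DERIV_imp_deriv)
    with d show ?thesis by simp
  qed
  have cf: "cfp l lam rho YY" unfolding cfp_def using lam_pos l_convex l_lip lder by blast
  have part2: "AE \<omega> in M.
            leb_outer (C_up YY l s Phi lam alpha n (\<lambda>i. X i \<omega>) (\<lambda>i. Y i \<omega>) z
                         (tau1 l Phi gamma lam n (\<lambda>i. X i \<omega>) (\<lambda>i. Y i \<omega>) z)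
                       - C_full YY l s Phi lam alpha n (\<lambda>i. X i \<omega>) (\<lambda>i. Y i \<omega>))
          \<le> leb_outer (C_up YY l s Phi lam alpha n (\<lambda>i. X i \<omega>) (\<lambda>i. Y i \<omega>) z
                         (tau0 Phi gamma rho lam n (\<lambda>i. X i \<omega>))
                       - C_full YY l s Phi lam alpha n (\<lambda>i. X i \<omega>) (\<lambda>i. Y i \<omega>))"
  proof (rule AE_I2)
    fix \<omega> assume "\<omega> \<in> space M"
    have "C_up YY l s Phi lam alpha n (\<lambda>i. X i \<omega>) (\<lambda>i. Y i \<omega>) z (tau1 l Phi gamma lam n (\<lambda>i. X i \<omega>) (\<lambda>i. Y i \<omega>) z)
       \<subseteq> C_up YY l s Phi lam alpha n (\<lambda>i. X i \<omega>) (\<lambda>i. Y i \<omega>) z (tau0 Phi gamma rho lam n (\<lambda>i. X i \<omega>))"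
      by (rule cfp.C_up_mono[OF cf z_in g0])
    thus "leb_outer (C_up YY l s Phi lam alpha n (\<lambda>i. X i \<omega>) (\<lambda>i. Y i \<omega>) z
                         (tau1 l Phi gamma lam n (\<lambda>i. X i \<omega>) (\<lambda>i. Y i \<omega>) z)
                       - C_full YY l s Phi lam alpha n (\<lambda>i. X i \<omega>) (\<lambda>i. Y i \<omega>))
          \<le> leb_outer (C_up YY l s Phi lam alpha n (\<lambda>i. X i \<omega>) (\<lambda>i. Y i \<omega>) z
                         (tau0 Phi gamma rho lam n (\<lambda>i. X i \<omega>))
                       - C_full YY l s Phi lam alpha n (\<lambda>i. X i \<omega>) (\<lambda>i. Y i \<omega>))"
      by (intro leb_outer_mono) blast
  qed
  define D where "D \<omega> = (\<lambda>i\<in>{1..n+1}. (X i \<omega>, Y i \<omega>))" for \<omega>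
  define Dp where "Dp \<sigma> \<omega> = (\<lambda>i\<in>{1..n+1}. (X (\<sigma> i) \<omega>, Y (\<sigma> i) \<omega>))" for \<sigma> :: "nat \<Rightarrow> nat" and \<omega>
  define DU where "DU \<omega> = (\<lambda>i\<in>{1..n+1}. (X i \<omega>, if i = n+1 then z else Y i \<omega>))" for \<omega>
  define Sc where "Sc p i = s (snd (p i)) (Vf l Phi lam n p i)" for p :: "nat \<Rightarrow> ((real ^ 'd) \<times> real)" and i
  define cnt where "cnt p j = card {i\<in>{1..n+1}. Sc p j \<le> Sc p i}" for p j
  define A where "A j = {p \<in> space (RR YY n). real (cnt p j) \<le> alpha * real (n+1)}" for j
  define EA where "EA j = {\<omega> \<in> space M. D \<omega> \<in> A j}" for j
  define W where "W \<omega> = fhat l Phi lam n (\<lambda>i. X i \<omega>) (\<lambda>i. Y i \<omega>) (Y (n+1) \<omega>)" for \<omega>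
  define T where "T \<omega> i = s (Y i \<omega>) (W \<omega> \<bullet> Phi (X i \<omega>))" for \<omega> i
  have mZ: "(\<lambda>\<omega>. (X i \<omega>, Y i \<omega>)) \<in> borel_measurable M" if "i \<in> {1..n+1}" for i
    by (rule borel_measurable_Pair[OF meas_X[OF that] meas_Y[OF that]])
  have toRR: "F \<in> measurable M (RR YY n)" if "F \<in> measurable M (OM n)" "\<And>\<omega>. \<omega> \<in> space M \<Longrightarrow> F \<omega> \<in> GY YY n" for F
    unfolding RR_def by (rule measurable_restrict_space2) (use that in auto)
  have mD0: "D \<in> measurable M (OM n)" unfolding D_def OM_def by (rule measurable_restrict) (rule mZ)
  have mD: "D \<in> measurable M (RR YY n)" by (rule toRR[OF mD0]) (auto simp: D_def GY_def range_Y)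
  have mDp0: "Dp \<sigma> \<in> measurable M (OM n)" if s: "\<sigma> permutes {1..n+1}" for \<sigma>
    unfolding Dp_def OM_def by (rule measurable_restrict) (rule mZ, use permutes_in_image[OF s] in auto)
  have mDp: "Dp \<sigma> \<in> measurable M (RR YY n)" if s: "\<sigma> permutes {1..n+1}" for \<sigma>
  proof (rule toRR[OF mDp0[OF s]])
    fix \<omega> assume w: "\<omega> \<in> space M"
    have "\<sigma> i \<in> {1..n+1}" if "i \<in> {1..n+1}" for i using permutes_in_image[OF s] that by blast
    thus "Dp \<sigma> \<omega> \<in> GY YY n" unfolding Dp_def GY_def using range_Y[OF _ w] by auto
  qed
  have mDU0: "DU \<in> measurable M (OM n)" unfolding DU_def OM_def
  proof (rule measurable_restrict)
    fix i assume i: "i \<in> {1..n+1}"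
    show "(\<lambda>\<omega>. (X i \<omega>, if i = n+1 then z else Y i \<omega>)) \<in> borel_measurable M"
      using borel_measurable_Pair[OF meas_X[OF i] borel_measurable_const[of z]]
        borel_measurable_Pair[OF meas_X[OF i] meas_Y[OF i]]
      by (cases "i = n+1") simp_all
  qed
  have mDU: "DU \<in> measurable M (RR YY n)" by (rule toRR[OF mDU0]) (auto simp: DU_def GY_def range_Y z_in)
  have mSc: "(\<lambda>p. Sc p i) \<in> borel_measurable (RR YY n)" if i: "i \<in> {1..n+1}" for i
    unfolding Sc_def by (rule meas_l[OF s_meas i meas_Vf[OF cf kern_meas l_meas i]])
  have cnt_sum: "real (cnt p j) = (\<Sum>i\<in>{1..n+1}. if Sc p j \<le> Sc p i then 1 else 0)" for p j
    unfolding cnt_def card_sum[OF finite_atLeastAtMost] of_nat_sum by (rule sum.cong) auto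
  have mA: "A j \<in> sets (RR YY n)" if j: "j \<in> {1..n+1}" for j
  proof -
    have m: "(\<lambda>p. \<Sum>i\<in>{1..n+1}. if Sc p j \<le> Sc p i then 1::real else 0) \<in> borel_measurable (RR YY n)"
    proof (rule borel_measurable_sum)
      fix i assume i: "i \<in> {1..n+1}"
      note [measurable] = mSc[OF i] mSc[OF j]
      show "(\<lambda>p. if Sc p j \<le> Sc p i then 1::real else 0) \<in> borel_measurable (RR YY n)" by measurable
    qed
    have "{p \<in> space (RR YY n). (\<Sum>i\<in>{1..n+1}. if Sc p j \<le> Sc p i then 1::real else 0) \<le> alpha * real (n+1)} \<in> sets (RR YY n)"
      using m by measurable
    thus ?thesis unfolding A_def cnt_sum .
  qed
  have mEA: "EA j \<in> sets M" if j: "j \<in> {1..n+1}" for j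
  proof -
    have "EA j = D -` A j \<inter> space M" unfolding EA_def by auto
    thus ?thesis using measurable_sets[OF mD mA[OF j]] by simp
  qed
  have VD: "Vf l Phi lam n (D \<omega>) i = W \<omega> \<bullet> Phi (X i \<omega>)" if i: "i \<in> {1..n+1}" for \<omega> i
  proof -
    have "fhat l Phi lam n (\<lambda>i. fst (D \<omega> i)) (\<lambda>i. snd (D \<omega> i)) (snd (D \<omega> (n+1))) = W \<omega>"
      unfolding W_def by (rule fhat_cong, rule reg_risk_cong) (auto simp: D_def)
    thus ?thesis unfolding Vf_def using i by (simp add: D_def)
  qed
  have VDp: "Vf l Phi lam n (Dp \<sigma> \<omega>) i = W \<omega> \<bullet> Phi (X (\<sigma> i) \<omega>)"
    if s: "\<sigma> permutes {1..n+1}" and i: "i \<in> {1..n+1}" for \<sigma> \<omega> i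
  proof -
    have "fhat l Phi lam n (\<lambda>i. fst (Dp \<sigma> \<omega> i)) (\<lambda>i. snd (Dp \<sigma> \<omega> i)) (snd (Dp \<sigma> \<omega> (n+1))) = W \<omega>"
      unfolding W_def
    proof (rule fhat_cong)
      fix w
      have "reg_risk l Phi lam n (\<lambda>i. fst (Dp \<sigma> \<omega> i)) ((\<lambda>i. snd (Dp \<sigma> \<omega> i))(n + 1 := snd (Dp \<sigma> \<omega> (n + 1)))) w
          = reg_risk l Phi lam n (\<lambda>i. X (\<sigma> i) \<omega>) (\<lambda>i. Y (\<sigma> i) \<omega>) w"
        by (rule reg_risk_cong) (auto simp: Dp_def)
      also have "\<dots> = reg_risk l Phi lam n (\<lambda>i. X i \<omega>) (\<lambda>i. Y i \<omega>) w" by (rule perm_risk[OF s])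
      also have "(\<lambda>i. Y i \<omega>) = (\<lambda>i. Y i \<omega>)(n + 1 := Y (n + 1) \<omega>)" by (rule ext) simp
      finally show "reg_risk l Phi lam n (\<lambda>i. fst (Dp \<sigma> \<omega> i)) ((\<lambda>i. snd (Dp \<sigma> \<omega> i))(n + 1 := snd (Dp \<sigma> \<omega> (n + 1)))) w
          = reg_risk l Phi lam n (\<lambda>i. X i \<omega>) ((\<lambda>i. Y i \<omega>)(n + 1 := Y (n + 1) \<omega>)) w" .
    qed
    thus ?thesis unfolding Vf_def using i by (simp add: Dp_def)
  qed
  have VDU: "Vf l Phi lam n (DU \<omega>) i = fhat l Phi lam n (\<lambda>i. X i \<omega>) (\<lambda>i. Y i \<omega>) z \<bullet> Phi (X i \<omega>)"
    if i: "i \<in> {1..n+1}" for \<omega> i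
  proof -
    have "fhat l Phi lam n (\<lambda>i. fst (DU \<omega> i)) (\<lambda>i. snd (DU \<omega> i)) (snd (DU \<omega> (n+1)))
        = fhat l Phi lam n (\<lambda>i. X i \<omega>) (\<lambda>i. Y i \<omega>) z"
      by (rule fhat_cong, rule reg_risk_cong) (auto simp: DU_def)
    thus ?thesis unfolding Vf_def using i by (simp add: DU_def)
  qed
  have ScD: "Sc (D \<omega>) i = T \<omega> i" if "i \<in> {1..n+1}" for \<omega> i
    unfolding Sc_def T_def VD[OF that] using that by (simp add: D_def)
  have ScDp: "Sc (Dp \<sigma> \<omega>) i = T \<omega> (\<sigma> i)" if s: "\<sigma> permutes {1..n+1}" and i: "i \<in> {1..n+1}" for \<sigma> \<omega> i
    unfolding Sc_def T_def VDp[OF s i] using i by (simp add: Dp_def)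
  have cntD: "cnt (D \<omega>) j = card {i\<in>{1..n+1}. T \<omega> j \<le> T \<omega> i}" if j: "j \<in> {1..n+1}" for \<omega> j
    unfolding cnt_def using ScD j by (metis (no_types, lifting) mem_Collect_eq Collect_cong)
  have cntDp: "cnt (Dp \<sigma> \<omega>) (n+1) = card {i\<in>{1..n+1}. T \<omega> (\<sigma> (n+1)) \<le> T \<omega> i}" if s: "\<sigma> permutes {1..n+1}" for \<sigma> \<omega>
  proof -
    have "cnt (Dp \<sigma> \<omega>) (n+1) = card {i\<in>{1..n+1}. T \<omega> (\<sigma> (n+1)) \<le> T \<omega> (\<sigma> i)}"
      unfolding cnt_def using ScDp[OF s] by (metis (no_types, lifting) atLeastAtMost_iff le_add2 le_refl Collect_cong)
    also have "\<dots> = card {i\<in>{1..n+1}. T \<omega> (\<sigma> (n+1)) \<le> T \<omega> i}"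
      by (rule card_perm[OF s]) simp
    finally show ?thesis .
  qed
  have Dsp: "D \<omega> \<in> space (RR YY n)" if "\<omega> \<in> space M" for \<omega> using measurable_space[OF mD that] .
  have Dpsp: "Dp \<sigma> \<omega> \<in> space (RR YY n)" if "\<sigma> permutes {1..n+1}" "\<omega> \<in> space M" for \<sigma> \<omega>
    using measurable_space[OF mDp[OF that(1)] that(2)] .
  obtain B where B: "B \<in> sets (OM n)" "A (n+1) = GY YY n \<inter> B"
    using mA[of "n+1"] unfolding RR_def sets_restrict_space by auto
  have preB: "{\<omega> \<in> space M. F \<omega> \<in> A (n+1)} = F -` B \<inter> space M"
    if "F \<in> measurable M (RR YY n)" for F
  proof -
    have "F \<omega> \<in> GY YY n" if "\<omega> \<in> space M" for \<omega>
      using measurable_space[OF \<open>F \<in> measurable M (RR YY n)\<close> that] unfolding space_RR by blast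
    moreover have "F \<omega> \<in> space (RR YY n)" if "\<omega> \<in> space M" for \<omega>
      using measurable_space[OF \<open>F \<in> measurable M (RR YY n)\<close> that] .
    ultimately show ?thesis unfolding A_def B(2)[unfolded A_def] by auto
  qed
  have exD: "distr M (OM n) (Dp \<sigma>) = distr M (OM n) D" if "\<sigma> permutes {1..n+1}" for \<sigma>
    using exch that unfolding exchangeable_def OM_def Dp_def D_def by auto
  have probEq: "P.prob (EA j) = P.prob (EA (n+1))" if j: "j \<in> {1..n+1}" for j
  proof -
    define \<sigma> where "\<sigma> = Transposition.transpose j (n+1)"
    have s: "\<sigma> permutes {1..n+1}" unfolding \<sigma>_def by (rule permutes_swap_id) (use j in auto)
    have sn: "\<sigma> (n+1) = j" unfolding \<sigma>_def by simp
    have "EA j = {\<omega> \<in> space M. Dp \<sigma> \<omega> \<in> A (n+1)}"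
    proof -
      have "D \<omega> \<in> A j \<longleftrightarrow> Dp \<sigma> \<omega> \<in> A (n+1)" if w: "\<omega> \<in> space M" for \<omega>
        unfolding A_def using Dsp[OF w] Dpsp[OF s w] cntD[OF j] cntDp[OF s] sn by simp
      thus ?thesis unfolding EA_def by blast
    qed
    also have "\<dots> = Dp \<sigma> -` B \<inter> space M" by (rule preB[OF mDp[OF s]])
    finally have "P.prob (EA j) = measure (distr M (OM n) (Dp \<sigma>)) B"
      by (simp add: measure_distr[OF mDp0[OF s] B(1)])
    also have "\<dots> = measure (distr M (OM n) D) B" by (simp add: exD[OF s])
    also have "\<dots> = P.prob (D -` B \<inter> space M)" by (simp add: measure_distr[OF mD0 B(1)])
    also have "D -` B \<inter> space M = EA (n+1)" unfolding EA_def by (rule preB[OF mD, symmetric])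
    finally show ?thesis .
  qed
  have sumbound: "(\<Sum>j\<in>{1..n+1}. P.prob (EA j)) \<le> alpha * real (n+1)"
  proof -
    have int: "integrable M (indicator (EA j) :: 'w \<Rightarrow> real)" if "j \<in> {1..n+1}" for j
      by (rule integrable_real_indicator[OF mEA[OF that]]) (simp add: P.emeasure_finite less_top[symmetric])
    have "(\<Sum>j\<in>{1..n+1}. P.prob (EA j)) = (\<Sum>j\<in>{1..n+1}. integral\<^sup>L M (indicator (EA j) :: 'w \<Rightarrow> real))"
      by (rule sum.cong) (simp_all add: mEA del: sum.cl_ivl_Suc)
    also have "\<dots> = integral\<^sup>L M (\<lambda>\<omega>. \<Sum>j\<in>{1..n+1}. (indicator (EA j) \<omega> :: real))"
      by (rule Bochner_Integration.integral_sum[where I="{1..n+1}" and M=M and f="\<lambda>j \<omega>. indicator (EA j) \<omega> :: real", symmetric]) (rule int)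
    also have "\<dots> \<le> integral\<^sup>L M (\<lambda>\<omega>. alpha * real (n+1))"
    proof (rule integral_mono)
      show "integrable M (\<lambda>\<omega>. \<Sum>j\<in>{1..n+1}. (indicator (EA j) \<omega> :: real))" by (rule Bochner_Integration.integrable_sum) (rule int)
      show "integrable M (\<lambda>\<omega>. alpha * real (n+1))" by simp
      fix \<omega> assume w: "\<omega> \<in> space M"
      have "(\<Sum>j\<in>{1..n+1}. (indicator (EA j) \<omega> :: real)) = real (card {j\<in>{1..n+1}. \<omega> \<in> EA j})"
        unfolding card_sum[OF finite_atLeastAtMost] of_nat_sum by (rule sum.cong) (auto simp: indicator_def)
      also have "{j\<in>{1..n+1}. \<omega> \<in> EA j} = {j\<in>{1..n+1}. real (card {i\<in>{1..n+1}. T \<omega> j \<le> T \<omega> i}) \<le> alpha * real (n+1)}"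
        unfolding EA_def A_def using w Dsp[OF w] cntD by auto
      also have "real (card \<dots>) \<le> alpha * real (n+1)"
        by (rule comb) (use alpha in auto)
      finally show "(\<Sum>j\<in>{1..n+1}. (indicator (EA j) \<omega> :: real)) \<le> alpha * real (n+1)" .
    qed
    also have "\<dots> = alpha * real (n+1)" by (simp add: P.prob_space)
    finally show ?thesis .
  qed
  have pA: "P.prob (EA (n+1)) \<le> alpha"
  proof -
    have "(\<Sum>j\<in>{1..n+1}. P.prob (EA j)) = real (n+1) * P.prob (EA (n+1))"
    proof -
      have "(\<Sum>j\<in>{1..n+1}. P.prob (EA j)) = (\<Sum>j\<in>{1..n+1}. P.prob (EA (n+1)))"
        by (rule sum.cong[OF refl probEq])
      thus ?thesis by (simp del: sum.cl_ivl_Suc)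
    qed
    with sumbound have "real (n+1) * P.prob (EA (n+1)) \<le> real (n+1) * alpha" by (simp add: mult.commute)
    thus ?thesis by (simp del: of_nat_Suc)
  qed
  have nI: "n+1 \<in> {1..n+1}" by simp
  define Ev where "Ev = {\<omega> \<in> space M. Y (n+1) \<omega> \<in> C_up YY l s Phi lam alpha n (\<lambda>i. X i \<omega>) (\<lambda>i. Y i \<omega>) z
                 (tau1 l Phi gamma lam n (\<lambda>i. X i \<omega>) (\<lambda>i. Y i \<omega>) z)}"
  have compl: "space M - Ev \<subseteq> EA (n+1)"
  proof
    fix \<omega> assume "\<omega> \<in> space M - Ev"
    hence w: "\<omega> \<in> space M" and nE: "Y (n+1) \<omega> \<notin> C_up YY l s Phi lam alpha n (\<lambda>i. X i \<omega>) (\<lambda>i. Y i \<omega>) z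
                 (tau1 l Phi gamma lam n (\<lambda>i. X i \<omega>) (\<lambda>i. Y i \<omega>) z)" unfolding Ev_def by auto
    have ysY: "\<forall>i\<in>{1..n}. Y i \<omega> \<in> YY" using range_Y[OF _ w] by auto
    have yY: "Y (n+1) \<omega> \<in> YY" using range_Y[OF _ w] by auto
    have "C_full YY l s Phi lam alpha n (\<lambda>i. X i \<omega>) (\<lambda>i. Y i \<omega>) \<subseteq> C_up YY l s Phi lam alpha n (\<lambda>i. X i \<omega>) (\<lambda>i. Y i \<omega>) z
                 (tau1 l Phi gamma lam n (\<lambda>i. X i \<omega>) (\<lambda>i. Y i \<omega>) z)"
      by (rule cfp.C_full_sub[OF cf ysY z_in s_lip])
    with nE have "Y (n+1) \<omega> \<notin> C_full YY l s Phi lam alpha n (\<lambda>i. X i \<omega>) (\<lambda>i. Y i \<omega>)" by blast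
    hence pf: "pval_full l s Phi lam n (\<lambda>i. X i \<omega>) (\<lambda>i. Y i \<omega>) (Y (n+1) \<omega>) \<le> alpha"
      using yY unfolding C_full_def by auto
    define K where "K = card {i\<in>{1..n}. T \<omega> (n+1) \<le> T \<omega> i}"
    have pK: "pval_full l s Phi lam n (\<lambda>i. X i \<omega>) (\<lambda>i. Y i \<omega>) (Y (n+1) \<omega>) = (1 + real K) / real (n+1)"
      unfolding pval_full_def Let_def K_def T_def W_def by simp
    have "{i\<in>{1..n+1}. T \<omega> (n+1) \<le> T \<omega> i} = insert (n+1) {i\<in>{1..n}. T \<omega> (n+1) \<le> T \<omega> i}" by auto
    hence cK: "cnt (D \<omega>) (n+1) = K + 1" unfolding cntD[OF nI] K_def by simp
    have "(1 + real K) \<le> alpha * real (n+1)" using pf unfolding pK by (simp add: divide_le_eq)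
    hence "D \<omega> \<in> A (n+1)" unfolding A_def using Dsp[OF w] cK by simp
    thus "\<omega> \<in> EA (n+1)" unfolding EA_def using w by simp
  qed
  define Vu where "Vu \<omega> i = Vf l Phi lam n (DU \<omega>) i" for \<omega> i
  have mVu: "(\<lambda>\<omega>. Vu \<omega> i) \<in> borel_measurable M" if "i \<in> {1..n+1}" for i
    unfolding Vu_def by (rule measurable_compose[OF mDU meas_Vf[OF cf kern_meas l_meas that]])
  define t1 where "t1 \<omega> i = sqrt (kern Phi (X i \<omega>) (X i \<omega>) * kern Phi (X (n+1) \<omega>) (X (n+1) \<omega>))
      * (gamma * (\<bar>deriv (l (Y (n+1) \<omega>)) (Vu \<omega> (n+1)) - deriv (l z) (Vu \<omega> (n+1))\<bar> / 2)) / (lam * real (n+1))" for \<omega> i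
  define PU where "PU \<omega> = (1 + (\<Sum>i\<in>{1..n}. if s (Y (n+1) \<omega>) (Vu \<omega> (n+1)) - t1 \<omega> (n+1) \<le> s (Y i \<omega>) (Vu \<omega> i) + t1 \<omega> i
      then 1 else 0)) / real (n+1)" for \<omega>
  have EvPU: "Ev = {\<omega> \<in> space M. alpha < PU \<omega>}"
  proof -
    have "Y (n+1) \<omega> \<in> C_up YY l s Phi lam alpha n (\<lambda>i. X i \<omega>) (\<lambda>i. Y i \<omega>) z
                 (tau1 l Phi gamma lam n (\<lambda>i. X i \<omega>) (\<lambda>i. Y i \<omega>) z) \<longleftrightarrow> alpha < PU \<omega>" if w: "\<omega> \<in> space M" for \<omega>
    proof -
      have yY: "Y (n+1) \<omega> \<in> YY" using range_Y[OF _ w] by auto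
      have t: "tau1 l Phi gamma lam n (\<lambda>i. X i \<omega>) (\<lambda>i. Y i \<omega>) z i (Y (n+1) \<omega>) = t1 \<omega> i" for i
        unfolding tau1_def rho1_def Let_def t1_def Vu_def VDU[OF nI] kern_def by simp
      have "PU \<omega> = pval_up l s Phi lam n (\<lambda>i. X i \<omega>) (\<lambda>i. Y i \<omega>) z (tau1 l Phi gamma lam n (\<lambda>i. X i \<omega>) (\<lambda>i. Y i \<omega>) z) (Y (n+1) \<omega>)"
        unfolding PU_def pval_up_def Let_def card_sum[OF finite_atLeastAtMost] of_nat_sum t
        by (intro arg_cong2[where f="(/)"] arg_cong2[where f="(+)"] refl sum.cong)
           (auto simp: Vu_def VDU)
      thus ?thesis unfolding C_up_def using yY by simp
    qed
    thus ?thesis unfolding Ev_def by auto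
  qed
  have mS: "(\<lambda>\<omega>. s (Y i \<omega>) (Vu \<omega> i)) \<in> borel_measurable M" if i: "i \<in> {1..n+1}" for i
    by (rule meas_l2[OF s_meas meas_Y[OF i] mVu[OF i]]) (rule range_Y[OF i])
  have mK: "(\<lambda>\<omega>. kern Phi (X i \<omega>) (X i \<omega>)) \<in> borel_measurable M" if i: "i \<in> {1..n+1}" for i
    using measurable_compose[OF borel_measurable_Pair[OF meas_X[OF i] meas_X[OF i]] kern_meas] by simp
  have mder: "(\<lambda>(y, u). deriv (l y) u) \<in> borel_measurable (restrict_space borel (YY \<times> UNIV))"
    by (rule meas_deriv[OF l_meas]) (rule lder)
  have mDl1: "(\<lambda>\<omega>. deriv (l (Y (n+1) \<omega>)) (Vu \<omega> (n+1))) \<in> borel_measurable M"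
    by (rule meas_l2[where l="\<lambda>y u. deriv (l y) u", OF mder meas_Y[OF nI] mVu[OF nI]])
       (use range_Y[OF nI] in auto)
  have mDl2: "(\<lambda>\<omega>. deriv (l z) (Vu \<omega> (n+1))) \<in> borel_measurable M"
    by (rule meas_l2[where l="\<lambda>y u. deriv (l y) u", OF mder borel_measurable_const mVu[OF nI]])
       (rule z_in)
  have mt1: "(\<lambda>\<omega>. t1 \<omega> i) \<in> borel_measurable M" if i: "i \<in> {1..n+1}" for i
  proof -
    note [measurable] = mK[OF i] mK[OF nI] mDl1 mDl2
    show ?thesis unfolding t1_def by measurable
  qed
  have mPU: "PU \<in> borel_measurable M"
    unfolding PU_def
  proof (intro borel_measurable_divide borel_measurable_add borel_measurable_const borel_measurable_sum)
    fix i assume i: "i \<in> {1..n}"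
    hence i': "i \<in> {1..n+1}" by auto
    note [measurable] = mS[OF i'] mS[OF nI] mt1[OF i'] mt1[OF nI]
    show "(\<lambda>\<omega>. if s (Y (n+1) \<omega>) (Vu \<omega> (n+1)) - t1 \<omega> (n+1) \<le> s (Y i \<omega>) (Vu \<omega> i) + t1 \<omega> i then 1::real else 0)
       \<in> borel_measurable M" by measurable
  qed
  have mEv: "Ev \<in> sets M" unfolding EvPU using mPU by measurable
  have part1: "P.prob Ev \<ge> 1 - alpha"
  proof -
    have "P.prob (space M - Ev) \<le> P.prob (EA (n+1))" by (rule P.finite_measure_mono[OF compl mEA[OF nI]])
    also have "\<dots> \<le> alpha" by (rule pA)
    finally have "P.prob (space M - Ev) \<le> alpha" .
    thus ?thesis using P.prob_compl[OF mEv] by simp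
  qed
  show ?thesis using part1 part2 unfolding Ev_def by simp
qed

end
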